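(* Let $(X,\rho)$ be a complete separable metric space, $T>0$, and let $\xi_t$, $t\in[0,T]$, be a strong Markov process with values in $X$ and càdlàg paths, belonging to the class $\mathcal{M}(\beta,\gamma)$ (with $\beta\ge1$, $\gamma>0$) with constants $a_0>0$, $K>0$. Let $r_1$ be the largest integer less than or equal to $-(\log_2 a_0+3)$, let $r$ be an integer with $r>r_1$, and let $T_r=\min\{((M_{r+2}\wedge a_0)^\gamma/(2K))^{1/\beta},T,1\}$. Then $$E Y_r\le\begin{cases}4T_r^{-1}e^T, & \text{if } T_r<1,\\ 1.95\,e^T, & \text{if } T_r=1.\end{cases}$$
   Context: $\alpha(h,a)=\sup\{P_{s,t}(x,\{y:\rho(x,y)\ge a\}) : x\in X,\ 0\le s\le t\le (s+h)\wedge T\}$, where $P_{s,t}$ is the transition function of $\xi$. Class $\mathcal{M}(\beta,\gamma)$ with constants $a_0,K$: $\alpha(h,a)\le K h^\beta/a^\gamma$ for all $h\in[0,T]$, $a\in(0,a_0]$. $M_r=2^{-r-1}$. For a partition $\kappa=\{0=t_0<t_1<\dots<t_{m_\kappa}=T\}$ of $[0,T]$ let $\xi_{k,\kappa}=\rho(\xi_{t_k},\xi_{t_{k-1}})$ and $K_r(\omega,\kappa)=\{k:1\le k\le m_\kappa,\ M_r\le \xi_{k,\kappa}(\omega)<M_{r-1}\}$. Then $Y_r(\omega)=\sup_\kappa \#K_r(\omega,\kappa)$, the supremum over all finite point partitions $\kappa$ of $[0,T]$. *)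

theory Defs
  imports "HOL-Analysis.Analysis" "HOL-Probability.Probability"
begin

definition Mr :: "int \<Rightarrow> real" where
  "Mr r = 2 powr (- real_of_int r - 1)"

definition transition_function ::
  "real \<Rightarrow> (real \<Rightarrow> real \<Rightarrow> 'a::topological_space \<Rightarrow> 'a measure) \<Rightarrow> bool" where
  "transition_function T P \<longleftrightarrow>
     (\<forall>s t x. 0 \<le> s \<and> s \<le> t \<and> t \<le> T \<longrightarrow>
        prob_space (P s t x) \<and> sets (P s t x) = sets borel) \<and>
     (\<forall>s t A. 0 \<le> s \<and> s \<le> t \<and> t \<le> T \<and> A \<in> sets borel \<longrightarrow>
        (\<lambda>x. emeasure (P s t x) A) \<in> borel_measurable borel) \<and>
     (\<forall>s x A. 0 \<le> s \<and> s \<le> T \<and> A \<in> sets borel \<longrightarrow>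
        emeasure (P s s x) A = indicator A x) \<and>
     (\<forall>s t u x A. 0 \<le> s \<and> s \<le> t \<and> t \<le> u \<and> u \<le> T \<and> A \<in> sets borel \<longrightarrow>
        emeasure (P s u x) A = (\<integral>\<^sup>+ y. emeasure (P t u y) A \<partial>P s t x))"

text \<open>Strong Markov process on [0,T] w.r.t. the filtration F with transition function P:
  xi is adapted, and for every stopping time tau with values in [0,T], every h \<ge> 0,
  Borel A and B in the sigma-algebra F_tau:
  P(xi_{tau+h} \<in> A, tau+h \<le> T, B) = E[ P_{tau,tau+h}(xi_tau, A); tau+h \<le> T, B ],
  i.e. P(xi_{tau+h} \<in> A | F_tau) = P_{tau,tau+h}(xi_tau, A) a.s. on {tau+h \<le> T}.\<close>
definition strong_markov ::
  "'b measure \<Rightarrow> (real \<Rightarrow> 'b measure) \<Rightarrow> real \<Rightarrow> (real \<Rightarrow> 'b \<Rightarrow> 'a::topological_space)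
     \<Rightarrow> (real \<Rightarrow> real \<Rightarrow> 'a \<Rightarrow> 'a measure) \<Rightarrow> bool" where
  "strong_markov M F T \<xi> P \<longleftrightarrow>
     filtration (space M) F \<and> (\<forall>t. sets (F t) \<subseteq> sets M) \<and>
     transition_function T P \<and>
     (\<forall>t\<in>{0..T}. \<xi> t \<in> borel_measurable (F t)) \<and>
     (\<forall>\<tau> h A B. stopping_time F \<tau> \<and> (\<forall>\<omega>\<in>space M. 0 \<le> \<tau> \<omega> \<and> \<tau> \<omega> \<le> T) \<and> 0 \<le> h \<and>
        A \<in> sets borel \<and> B \<in> sets (filtration.pre_sigma (space M) F \<tau>) \<longrightarrow>
        emeasure M {\<omega> \<in> B. \<tau> \<omega> + h \<le> T \<and> \<xi> (\<tau> \<omega> + h) \<omega> \<in> A} =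
        (\<integral>\<^sup>+ \<omega>. indicator {\<omega> \<in> B. \<tau> \<omega> + h \<le> T} \<omega> *
                 emeasure (P (\<tau> \<omega>) (\<tau> \<omega> + h) (\<xi> (\<tau> \<omega>) \<omega>)) A \<partial>M))"

definition cadlag_paths :: "'b measure \<Rightarrow> real \<Rightarrow> (real \<Rightarrow> 'b \<Rightarrow> 'a::topological_space) \<Rightarrow> bool" where
  "cadlag_paths M T \<xi> \<longleftrightarrow>
     (\<forall>\<omega>\<in>space M.
        (\<forall>t\<in>{0..<T}. continuous (at_right t) (\<lambda>s. \<xi> s \<omega>)) \<and>
        (\<forall>t\<in>{0<..T}. \<exists>l. ((\<lambda>s. \<xi> s \<omega>) \<longlongrightarrow> l) (at_left t)))"

definition alpha ::
  "real \<Rightarrow> (real \<Rightarrow> real \<Rightarrow> 'a::metric_space \<Rightarrow> 'a measure) \<Rightarrow> real \<Rightarrow> real \<Rightarrow> real" where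
  "alpha T P h a = (SUP (x, s, t) \<in> {(x, s, t). 0 \<le> s \<and> s \<le> t \<and> t \<le> min (s + h) T}.
                       measure (P s t x) {y. dist x y \<ge> a})"

definition class_M ::
  "real \<Rightarrow> (real \<Rightarrow> real \<Rightarrow> 'a::metric_space \<Rightarrow> 'a measure) \<Rightarrow> real \<Rightarrow> real \<Rightarrow> real \<Rightarrow> real \<Rightarrow> bool" where
  "class_M T P \<beta> \<gamma> a0 K \<longleftrightarrow>
     (\<forall>h\<in>{0..T}. \<forall>a\<in>{0<..a0}. alpha T P h a \<le> K * h powr \<beta> / a powr \<gamma>)"

definition partitions :: "real \<Rightarrow> (nat \<times> (nat \<Rightarrow> real)) set" where
  "partitions T = {(m, t). t 0 = 0 \<and> t m = T \<and> (\<forall>k<m. t k < t (Suc k))}"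

definition Kset :: "(real \<Rightarrow> 'b \<Rightarrow> 'a::metric_space) \<Rightarrow> int \<Rightarrow> 'b \<Rightarrow> nat \<times> (nat \<Rightarrow> real) \<Rightarrow> nat set" where
  "Kset \<xi> r \<omega> \<kappa> = {k. 1 \<le> k \<and> k \<le> fst \<kappa> \<and>
      Mr r \<le> dist (\<xi> (snd \<kappa> k) \<omega>) (\<xi> (snd \<kappa> (k - 1)) \<omega>) \<and>
      dist (\<xi> (snd \<kappa> k) \<omega>) (\<xi> (snd \<kappa> (k - 1)) \<omega>) < Mr (r - 1)}"

definition Y :: "real \<Rightarrow> (real \<Rightarrow> 'b \<Rightarrow> 'a::metric_space) \<Rightarrow> int \<Rightarrow> 'b \<Rightarrow> ennreal" where
  "Y T \<xi> r \<omega> = (SUP \<kappa> \<in> partitions T. of_nat (card (Kset \<xi> r \<omega> \<kappa>)))"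

end

theory Submission
  imports Defs
begin

locale SM =
  fixes M :: "'b measure" and F :: "real \<Rightarrow> 'b measure"
    and \<xi> :: "real \<Rightarrow> 'b \<Rightarrow> 'a::polish_space"
    and P :: "real \<Rightarrow> real \<Rightarrow> 'a \<Rightarrow> 'a measure" and T :: real
  assumes prob: "prob_space M" and Tpos: "T > 0" and sm: "strong_markov M F T \<xi> P"
begin

lemma smD: "filtration (space M) F" "\<forall>t. sets (F t) \<subseteq> sets M" "transition_function T P"
     "\<forall>t\<in>{0..T}. \<xi> t \<in> borel_measurable (F t)"
  using sm[unfolded strong_markov_def] by (auto dest: conjunct1 conjunct2 simp only:)

lemma filt: "filtration (space M) F"
  by (rule smD(1))

lemma space_F: "space (F t) = space M"
  using filt by (simp add: filtration_def)

lemma F_mono: "s \<le> t \<Longrightarrow> sets (F s) \<subseteq> sets (F t)"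
  using filt by (simp add: filtration_def)

lemma F_sub: "sets (F t) \<subseteq> sets M"
  using smD(2) by blast

lemma tf: "transition_function T P"
  by (rule smD(3))

lemma xi_meas_F: "t \<in> {0..T} \<Longrightarrow> \<xi> t \<in> borel_measurable (F t)"
  using smD(4) by blast

lemma xi_meas_Fle: "0 \<le> t \<Longrightarrow> t \<le> u \<Longrightarrow> t \<le> T \<Longrightarrow> \<xi> t \<in> borel_measurable (F u)"
proof -
  assume a: "0 \<le> t" "t \<le> u" "t \<le> T"
  have "\<xi> t \<in> borel_measurable (F t)" using xi_meas_F a by auto
  then show ?thesis
    using F_mono[OF a(2)] space_F
    by (metis measurable_cong_sets measurable_from_subalg subalgebra_def order_refl)
qed

lemma xi_meas: "0 \<le> t \<Longrightarrow> t \<le> T \<Longrightarrow> \<xi> t \<in> borel_measurable M"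
proof -
  assume a: "0 \<le> t" "t \<le> T"
  have "\<xi> t \<in> borel_measurable (F t)" using xi_meas_F a by auto
  moreover have "subalgebra M (F t)" using F_sub space_F by (simp add: subalgebra_def)
  ultimately show ?thesis by (rule measurable_from_subalg[rotated])
qed

lemma P_prob: "0 \<le> s \<Longrightarrow> s \<le> t \<Longrightarrow> t \<le> T \<Longrightarrow> prob_space (P s t x) \<and> sets (P s t x) = sets borel"
  using tf unfolding transition_function_def by (elim conjE) simp

lemma markov_const:
  assumes B: "B \<in> sets (F s)" and st: "0 \<le> s" "s \<le> u" "u \<le> T" and A: "A \<in> sets borel"
  shows "emeasure M {\<omega>\<in>B. \<xi> u \<omega> \<in> A} = (\<integral>\<^sup>+ \<omega>. indicator B \<omega> * emeasure (P s u (\<xi> s \<omega>)) A \<partial>M)"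
proof -
  interpret filtration "space M" F by (rule filt)
  have st0: "stopping_time F (\<lambda>_. s)" by (rule stopping_time_const)
  have "B \<in> sets (pre_sigma (\<lambda>_. s))"
  proof (rule sets_pre_sigmaI[OF st0])
    fix t
    show "{\<omega> \<in> B. s \<le> t} \<in> sets (F t)"
    proof (cases "s \<le> t")
      case True then show ?thesis using B F_mono by auto
    next
      case False then show ?thesis by simp
    qed
  qed
  then have "emeasure M {\<omega> \<in> B. s + (u - s) \<le> T \<and> \<xi> (s + (u - s)) \<omega> \<in> A} =
        (\<integral>\<^sup>+ \<omega>. indicator {\<omega> \<in> B. s + (u - s) \<le> T} \<omega> *
                 emeasure (P s (s + (u - s)) (\<xi> s \<omega>)) A \<partial>M)"
  proof -
    have "\<forall>\<tau> h A B. stopping_time F \<tau> \<and> (\<forall>\<omega>\<in>space M. 0 \<le> \<tau> \<omega> \<and> \<tau> \<omega> \<le> T) \<and> 0 \<le> h \<and>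
        A \<in> sets borel \<and> B \<in> sets (filtration.pre_sigma (space M) F \<tau>) \<longrightarrow>
        emeasure M {\<omega> \<in> B. \<tau> \<omega> + h \<le> T \<and> \<xi> (\<tau> \<omega> + h) \<omega> \<in> A} =
        (\<integral>\<^sup>+ \<omega>. indicator {\<omega> \<in> B. \<tau> \<omega> + h \<le> T} \<omega> *
                 emeasure (P (\<tau> \<omega>) (\<tau> \<omega> + h) (\<xi> (\<tau> \<omega>) \<omega>)) A \<partial>M)"
      using sm[unfolded strong_markov_def] by (elim conjE)
    note X = spec[OF spec[OF spec[OF spec[OF this, of "\<lambda>_. s"], of "u - s"], of A], of B]
    have "stopping_time F (\<lambda>_. s) \<and> (\<forall>\<omega>\<in>space M. 0 \<le> s \<and> s \<le> T) \<and> 0 \<le> u - s \<and>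
        A \<in> sets borel \<and> B \<in> sets (filtration.pre_sigma (space M) F (\<lambda>_. s))"
      using st A st0 \<open>B \<in> sets (pre_sigma (\<lambda>_. s))\<close> by auto
    then show ?thesis by (rule mp[OF X])
  qed
  moreover have e1: "s + (u - s) = u" by simp
  moreover have e2: "{\<omega> \<in> B. u \<le> T} = B" using st by blast
  moreover have e3: "{\<omega> \<in> B. u \<le> T \<and> \<xi> u \<omega> \<in> A} = {\<omega>\<in>B. \<xi> u \<omega> \<in> A}" using st by blast
  ultimately show ?thesis by (simp only: e1 e2 e3)
qed

lemma markov_bound:
  assumes B: "B \<in> sets (F s)" and st: "0 \<le> s" "s \<le> u" "u \<le> T" and c: "0 < c'" "c' < c"
    and al: "\<And>x. measure (P s u x) {y. c' \<le> dist x y} \<le> \<alpha>"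
  shows "measure M {\<omega>\<in>B. c \<le> dist (\<xi> u \<omega>) (\<xi> s \<omega>)} \<le> \<alpha> * measure M B"
proof -
  interpret pM: prob_space M by (rule prob)
  define \<epsilon> where "\<epsilon> = (c - c') / 2"
  have \<epsilon>: "\<epsilon> > 0" using c by (simp add: \<epsilon>_def)
  have c'\<epsilon>: "c' = c - 2 * \<epsilon>" unfolding \<epsilon>_def by (simp add: field_simps)
  have a0: "0 \<le> \<alpha>" using al[of undefined] by (meson measure_nonneg order_trans)
  obtain D :: "'a set" where D: "countable D" "\<And>X. open X \<Longrightarrow> X \<noteq> {} \<Longrightarrow> \<exists>d\<in>D. d \<in> X"
    using countable_dense_exists by blast
  have Dne: "D \<noteq> {}" using D(2)[of UNIV] by auto
  define d where "d = from_nat_into D"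
  have rd: "range d = D" using Dne D(1) by (simp add: d_def range_from_nat_into)
  define V where "V i = ball (d i) \<epsilon>" for i
  define W where "W = disjointed V"
  have cover: "\<exists>i. x \<in> W i" for x
  proof -
    obtain e where "e \<in> D" "e \<in> ball x \<epsilon>" using D(2)[of "ball x \<epsilon>"] \<epsilon> by auto
    then obtain i where "d i \<in> ball x \<epsilon>" using rd by blast
    then have "x \<in> (\<Union>i. V i)" by (auto simp: V_def dist_commute)
    then have "x \<in> (\<Union>i. disjointed V i)" by (simp only: UN_disjointed_eq)
    then show ?thesis unfolding W_def by blast
  qed
  have WV: "W i \<subseteq> V i" for i unfolding W_def by (rule disjointed_subset)
  have Wb: "W i \<in> sets borel" for i
  proof -
    have "range V \<subseteq> sets borel" by (auto simp: V_def)
    then show ?thesis unfolding W_def using sets.range_disjointed_sets[of V borel] by auto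
  qed
  have Wd: "disjoint_family W" unfolding W_def by (rule disjoint_family_disjointed)
  have Bsp: "B \<subseteq> space M" using B sets.sets_into_space space_F by blast
  have BM: "B \<in> sets M" using B F_sub by blast
  define S where "S i = {\<omega>\<in>B. \<xi> s \<omega> \<in> W i}" for i
  have SF: "S i \<in> sets (F s)" for i
  proof -
    have "\<xi> s -` W i \<inter> space (F s) \<in> sets (F s)"
      using measurable_sets[OF xi_meas_F Wb] st by auto
    moreover have "S i = B \<inter> (\<xi> s -` W i \<inter> space (F s))"
      using Bsp space_F by (auto simp: S_def)
    ultimately show ?thesis using B by auto
  qed
  have SM: "S i \<in> sets M" for i using SF F_sub by blast
  define A where "A i = {y. c - \<epsilon> \<le> dist y (d i)}" for i
  have Ab: "A i \<in> sets borel" for i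
  proof -
    have "closed (A i)" unfolding A_def by (intro closed_Collect_le continuous_intros)
    then show ?thesis by simp
  qed
  have xu: "\<xi> u \<in> borel_measurable M" using xi_meas st by auto
  have xs: "\<xi> s \<in> borel_measurable M" using xi_meas st by auto
  define G where "G i = {\<omega>\<in>S i. \<xi> u \<omega> \<in> A i}" for i
  have GM: "G i \<in> sets M" for i
  proof -
    have "\<xi> u -` A i \<inter> space M \<in> sets M" using measurable_sets[OF xu Ab] .
    moreover have "G i = S i \<inter> (\<xi> u -` A i \<inter> space M)" using Bsp by (auto simp: G_def S_def)
    ultimately show ?thesis using SM by auto
  qed
  define E where "E = {\<omega>\<in>B. c \<le> dist (\<xi> u \<omega>) (\<xi> s \<omega>)}"
  have EM: "E \<in> sets M"
  proof -
    have "E = B \<inter> {\<omega>\<in>space M. c \<le> dist (\<xi> u \<omega>) (\<xi> s \<omega>)}" using Bsp by (auto simp: E_def)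
    moreover have "{\<omega>\<in>space M. c \<le> dist (\<xi> u \<omega>) (\<xi> s \<omega>)} \<in> sets M"
      using xu xs by measurable
    ultimately show ?thesis using BM by auto
  qed
  have EG: "E \<subseteq> (\<Union>i. G i)"
  proof
    fix \<omega> assume \<omega>: "\<omega> \<in> E"
    obtain i where i: "\<xi> s \<omega> \<in> W i" using cover by blast
    then have "\<xi> s \<omega> \<in> V i" using WV by blast
    then have "dist (\<xi> s \<omega>) (d i) < \<epsilon>" by (simp add: V_def dist_commute)
    moreover have "c \<le> dist (\<xi> u \<omega>) (\<xi> s \<omega>)" using \<omega> by (simp add: E_def)
    moreover have "dist (\<xi> u \<omega>) (\<xi> s \<omega>) \<le> dist (\<xi> u \<omega>) (d i) + dist (\<xi> s \<omega>) (d i)"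
      by (rule dist_triangle2)
    ultimately have "\<xi> u \<omega> \<in> A i" by (auto simp: A_def)
    then show "\<omega> \<in> (\<Union>i. G i)" using \<omega> i by (auto simp: G_def S_def E_def)
  qed
  have Gle: "emeasure M (G i) \<le> ennreal \<alpha> * emeasure M (S i)" for i
  proof -
    have "emeasure M (G i) = (\<integral>\<^sup>+ \<omega>. indicator (S i) \<omega> * emeasure (P s u (\<xi> s \<omega>)) (A i) \<partial>M)"
      unfolding G_def by (rule markov_const[OF SF st Ab])
    also have "\<dots> \<le> (\<integral>\<^sup>+ \<omega>. ennreal \<alpha> * indicator (S i) \<omega> \<partial>M)"
    proof (rule nn_integral_mono)
      fix \<omega> assume "\<omega> \<in> space M"
      show "indicator (S i) \<omega> * emeasure (P s u (\<xi> s \<omega>)) (A i) \<le> ennreal \<alpha> * indicator (S i) \<omega>"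
      proof (cases "\<omega> \<in> S i")
        case True
        let ?x = "\<xi> s \<omega>"
        have Px: "prob_space (P s u ?x)" "sets (P s u ?x) = sets borel" using P_prob st by auto
        interpret Pp: prob_space "P s u ?x" by (rule Px(1))
        have "?x \<in> V i" using True WV by (auto simp: S_def)
        then have dx: "dist ?x (d i) < \<epsilon>" by (simp add: V_def dist_commute)
        have sub: "A i \<subseteq> {y. c' \<le> dist ?x y}"
        proof
          fix y assume "y \<in> A i"
          then have "c - \<epsilon> \<le> dist y (d i)" by (simp add: A_def)
          moreover have "dist y (d i) \<le> dist ?x y + dist ?x (d i)" by (rule dist_triangle3)
          ultimately have "c' \<le> dist ?x y" using dx c'\<epsilon> by linarith
          then show "y \<in> {y. c' \<le> dist ?x y}" by simp
        qed
        have cb: "{y. c' \<le> dist ?x y} \<in> sets (P s u ?x)"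
        proof -
          have "closed {y. c' \<le> dist ?x y}" by (intro closed_Collect_le continuous_intros)
          then show ?thesis using Px(2) by simp
        qed
        have "emeasure (P s u ?x) (A i) \<le> emeasure (P s u ?x) {y. c' \<le> dist ?x y}"
          by (rule emeasure_mono[OF sub cb])
        also have "\<dots> = ennreal (measure (P s u ?x) {y. c' \<le> dist ?x y})"
          by (rule Pp.emeasure_eq_measure)
        also have "\<dots> \<le> ennreal \<alpha>" using al by (simp add: ennreal_leI)
        finally show ?thesis using True by simp
      qed simp
    qed
    also have "\<dots> = ennreal \<alpha> * emeasure M (S i)"
      using SM by (simp add: nn_integral_cmult)
    finally show ?thesis .
  qed
  have "emeasure M E \<le> emeasure M (\<Union>i. G i)"
    using EG GM by (intro emeasure_mono) auto
  also have "\<dots> \<le> (\<Sum>i. emeasure M (G i))"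
    using GM by (intro emeasure_subadditive_countably) auto
  also have "\<dots> \<le> (\<Sum>i. ennreal \<alpha> * emeasure M (S i))"
    using Gle by (intro suminf_le) auto
  also have "\<dots> = ennreal \<alpha> * (\<Sum>i. emeasure M (S i))"
    by (rule ennreal_suminf_cmult)
  also have "(\<Sum>i. emeasure M (S i)) = emeasure M (\<Union>i. S i)"
  proof (rule suminf_emeasure)
    show "range S \<subseteq> sets M" using SM by auto
    show "disjoint_family S" using Wd by (auto simp: disjoint_family_on_def S_def)
  qed
  also have "(\<Union>i. S i) = B" using cover by (auto simp: S_def)
  finally have "emeasure M E \<le> ennreal \<alpha> * emeasure M B" .
  then have "ennreal (measure M E) \<le> ennreal (\<alpha> * measure M B)"
    using pM.emeasure_eq_measure a0 by (simp add: ennreal_mult)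
  then show ?thesis using a0 unfolding E_def
    by (simp add: ennreal_le_iff)
qed

end

definition grid :: "real \<Rightarrow> nat \<Rightarrow> nat \<Rightarrow> real" where
  "grid T N j = T * real j / real N"

definition hit :: "real \<Rightarrow> (real \<Rightarrow> 'b \<Rightarrow> 'a::metric_space) \<Rightarrow> nat \<Rightarrow> real \<Rightarrow> nat \<Rightarrow> 'b \<Rightarrow> nat" where
  "hit T \<xi> N b i \<omega> = (if \<exists>j. i < j \<and> j \<le> N \<and> b \<le> dist (\<xi> (grid T N j) \<omega>) (\<xi> (grid T N i) \<omega>)
     then (LEAST j. i < j \<and> j \<le> N \<and> b \<le> dist (\<xi> (grid T N j) \<omega>) (\<xi> (grid T N i) \<omega>)) else Suc N)"

primrec idx :: "real \<Rightarrow> (real \<Rightarrow> 'b \<Rightarrow> 'a::metric_space) \<Rightarrow> nat \<Rightarrow> real \<Rightarrow> nat \<Rightarrow> 'b \<Rightarrow> nat" where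
  "idx T \<xi> N b 0 \<omega> = 0"
| "idx T \<xi> N b (Suc k) \<omega> = hit T \<xi> N b (idx T \<xi> N b k \<omega>) \<omega>"

lemma hit_none: "\<not> (\<exists>j. i < j \<and> j \<le> N \<and> b \<le> dist (\<xi> (grid T N j) \<omega>) (\<xi> (grid T N i) \<omega>)) \<Longrightarrow>
  hit T \<xi> N b i \<omega> = Suc N"
  unfolding hit_def by (rule if_not_P)

lemma hit_some: "(\<exists>j. i < j \<and> j \<le> N \<and> b \<le> dist (\<xi> (grid T N j) \<omega>) (\<xi> (grid T N i) \<omega>)) \<Longrightarrow>
  hit T \<xi> N b i \<omega> = (LEAST j. i < j \<and> j \<le> N \<and> b \<le> dist (\<xi> (grid T N j) \<omega>) (\<xi> (grid T N i) \<omega>))"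
  unfolding hit_def by (rule if_P)

lemma hit_le: "hit T \<xi> N b i \<omega> \<le> Suc N"
proof -
  let ?Q = "\<lambda>j. i < j \<and> j \<le> N \<and> b \<le> dist (\<xi> (grid T N j) \<omega>) (\<xi> (grid T N i) \<omega>)"
  show ?thesis
  proof (cases "\<exists>j. ?Q j")
    case True
    then have "?Q (LEAST j. ?Q j)" by (rule LeastI_ex)
    then show ?thesis using True by (simp add: hit_some)
  qed (simp add: hit_none)
qed

lemma hit_gt: "i \<le> N \<Longrightarrow> i < hit T \<xi> N b i \<omega>"
proof -
  assume iN: "i \<le> N"
  let ?Q = "\<lambda>j. i < j \<and> j \<le> N \<and> b \<le> dist (\<xi> (grid T N j) \<omega>) (\<xi> (grid T N i) \<omega>)"
  show ?thesis
  proof (cases "\<exists>j. ?Q j")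
    case True
    then have "?Q (LEAST j. ?Q j)" by (rule LeastI_ex)
    then show ?thesis using True by (simp add: hit_some)
  qed (use iN in \<open>simp add: hit_none\<close>)
qed

lemma hit_eq_iff:
  assumes "i < j" "j \<le> N"
  shows "hit T \<xi> N b i \<omega> = j \<longleftrightarrow> b \<le> dist (\<xi> (grid T N j) \<omega>) (\<xi> (grid T N i) \<omega>) \<and>
     (\<forall>l. i < l \<and> l < j \<longrightarrow> dist (\<xi> (grid T N l) \<omega>) (\<xi> (grid T N i) \<omega>) < b)"
proof -
  let ?Q = "\<lambda>j. i < j \<and> j \<le> N \<and> b \<le> dist (\<xi> (grid T N j) \<omega>) (\<xi> (grid T N i) \<omega>)"
  show ?thesis
  proof
    assume h: "hit T \<xi> N b i \<omega> = j"
    have ex: "\<exists>j. ?Q j"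
    proof (rule ccontr)
      assume "\<not> (\<exists>j. ?Q j)"
      then have "hit T \<xi> N b i \<omega> = Suc N" by (rule hit_none)
      then show False using h assms by simp
    qed
    then have hl: "hit T \<xi> N b i \<omega> = (LEAST j. ?Q j)" by (rule hit_some)
    have "?Q (LEAST j. ?Q j)" using ex by (rule LeastI_ex)
    moreover have "\<not> ?Q l" if "l < (LEAST j. ?Q j)" for l using not_less_Least[OF that] .
    ultimately show "b \<le> dist (\<xi> (grid T N j) \<omega>) (\<xi> (grid T N i) \<omega>) \<and>
     (\<forall>l. i < l \<and> l < j \<longrightarrow> dist (\<xi> (grid T N l) \<omega>) (\<xi> (grid T N i) \<omega>) < b)"
      using h hl assms by (metis le_less_trans less_imp_le not_le)
  next
    assume h: "b \<le> dist (\<xi> (grid T N j) \<omega>) (\<xi> (grid T N i) \<omega>) \<and>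
     (\<forall>l. i < l \<and> l < j \<longrightarrow> dist (\<xi> (grid T N l) \<omega>) (\<xi> (grid T N i) \<omega>) < b)"
    then have Qj: "?Q j" using assms by blast
    then have ex: "\<exists>j. ?Q j" by blast
    have "(LEAST j. ?Q j) = j"
    proof (rule Least_equality)
      show "?Q j" by (rule Qj)
      fix y assume "?Q y"
      then show "j \<le> y" using h by (meson not_le not_less)
    qed
    then show "hit T \<xi> N b i \<omega> = j" using hit_some[of i N b \<xi> T \<omega>, OF ex] by simp
  qed
qed

lemma hit_gt_bound:
  assumes "v \<le> N" "v < hit T \<xi> N b i \<omega>" "i < l" "l \<le> v"
  shows "dist (\<xi> (grid T N l) \<omega>) (\<xi> (grid T N i) \<omega>) < b"
proof (rule ccontr)
  let ?Q = "\<lambda>j. i < j \<and> j \<le> N \<and> b \<le> dist (\<xi> (grid T N j) \<omega>) (\<xi> (grid T N i) \<omega>)"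
  assume "\<not> ?thesis"
  then have Ql: "?Q l" using assms by auto
  then have ex: "\<exists>j. ?Q j" by blast
  then have "hit T \<xi> N b i \<omega> = (LEAST j. ?Q j)" by (rule hit_some)
  also have "\<dots> \<le> l" using Ql by (rule Least_le)
  finally show False using assms by simp
qed

lemma idx_le: "idx T \<xi> N b k \<omega> \<le> Suc N"
  by (cases k) (simp_all add: hit_le)

lemma idx_ge: "idx T \<xi> N b k \<omega> \<le> N \<Longrightarrow> k \<le> idx T \<xi> N b k \<omega>"
proof (induction k)
  case 0 then show ?case by simp
next
  case (Suc k)
  have "idx T \<xi> N b k \<omega> \<le> N"
  proof (rule ccontr)
    assume "\<not> ?thesis"
    then have "idx T \<xi> N b k \<omega> = Suc N" using idx_le[of T \<xi> N b k \<omega>] by simp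
    moreover have "hit T \<xi> N b (Suc N) \<omega> = Suc N" by (rule hit_none) simp
    ultimately show False using Suc.prems by simp
  qed
  then show ?case using Suc hit_gt[of "idx T \<xi> N b k \<omega>" N T \<xi> b \<omega>] by simp
qed

lemma greedy:
  assumes b: "0 < b" and uv: "u < v" "v \<le> N"
    and d: "2 * b \<le> dist (\<xi> (grid T N v) \<omega>) (\<xi> (grid T N u) \<omega>)"
  shows "\<exists>l. 0 < l \<and> u < idx T \<xi> N b l \<omega> \<and> idx T \<xi> N b l \<omega> \<le> v"
proof -
  let ?I = "\<lambda>l. idx T \<xi> N b l \<omega>"
  define L where "L = {l. ?I l \<le> u}"
  have "0 \<in> L" by (simp add: L_def)
  have "L \<subseteq> {..u}"
  proof
    fix l assume "l \<in> L"
    then have "?I l \<le> u" by (simp add: L_def)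
    moreover then have "l \<le> ?I l" using uv by (intro idx_ge) simp
    ultimately show "l \<in> {..u}" by simp
  qed
  then have fL: "finite L" by (rule finite_subset) simp
  define l0 where "l0 = Max L"
  have l0L: "l0 \<in> L" using fL \<open>0 \<in> L\<close> unfolding l0_def by (intro Max_in) auto
  have "Suc l0 \<notin> L" using fL l0_def by (metis Max_ge Suc_n_not_le_n)
  then have gt: "u < ?I (Suc l0)" by (simp add: L_def)
  show ?thesis
  proof (cases "?I (Suc l0) \<le> v")
    case True then show ?thesis using gt by blast
  next
    case False
    let ?i = "?I l0"
    have iu: "?i \<le> u" using l0L by (simp add: L_def)
    have hv: "v < hit T \<xi> N b ?i \<omega>" using False by simp
    have d1: "dist (\<xi> (grid T N v) \<omega>) (\<xi> (grid T N ?i) \<omega>) < b"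
      using hit_gt_bound[OF uv(2) hv] iu uv by simp
    have d2: "dist (\<xi> (grid T N u) \<omega>) (\<xi> (grid T N ?i) \<omega>) < b"
    proof (cases "?i = u")
      case True then show ?thesis using b by simp
    next
      case False
      then show ?thesis using hit_gt_bound[OF uv(2) hv, of u] iu uv by simp
    qed
    have "dist (\<xi> (grid T N v) \<omega>) (\<xi> (grid T N u) \<omega>) \<le>
        dist (\<xi> (grid T N v) \<omega>) (\<xi> (grid T N ?i) \<omega>) + dist (\<xi> (grid T N u) \<omega>) (\<xi> (grid T N ?i) \<omega>)"
      by (rule dist_triangle2)
    then show ?thesis using d d1 d2 by simp
  qed
qed

context SM begin

abbreviation "g N j \<equiv> grid T N j"

lemma grid_mono: "0 < N \<Longrightarrow> i \<le> j \<Longrightarrow> grid T N i \<le> grid T N j"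
  using Tpos by (simp add: grid_def divide_right_mono mult_left_mono)

lemma grid_strict: "0 < N \<Longrightarrow> i < j \<Longrightarrow> grid T N i < grid T N j"
  using Tpos by (simp add: grid_def divide_strict_right_mono)

lemma grid_nonneg: "0 \<le> grid T N j"
  using Tpos by (simp add: grid_def)

lemma grid_le_T: "0 < N \<Longrightarrow> j \<le> N \<Longrightarrow> grid T N j \<le> T"
  using Tpos by (simp add: grid_def field_simps)

lemma grid_0[simp]: "grid T N 0 = 0" by (simp add: grid_def)

lemma pred_dist:
  assumes "0 < N" "l \<le> j" "l' \<le> j" "j \<le> N"
  shows "Measurable.pred (F (g N j)) (\<lambda>\<omega>. dist (\<xi> (g N l) \<omega>) (\<xi> (g N l') \<omega>) < b)"
    and "Measurable.pred (F (g N j)) (\<lambda>\<omega>. b \<le> dist (\<xi> (g N l) \<omega>) (\<xi> (g N l') \<omega>))"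
proof -
  have [measurable]: "\<xi> (g N l) \<in> borel_measurable (F (g N j))"
    using assms by (intro xi_meas_Fle grid_nonneg grid_mono grid_le_T) auto
  have [measurable]: "\<xi> (g N l') \<in> borel_measurable (F (g N j))"
    using assms by (intro xi_meas_Fle grid_nonneg grid_mono grid_le_T) auto
  show "Measurable.pred (F (g N j)) (\<lambda>\<omega>. dist (\<xi> (g N l) \<omega>) (\<xi> (g N l') \<omega>) < b)" by measurable
  show "Measurable.pred (F (g N j)) (\<lambda>\<omega>. b \<le> dist (\<xi> (g N l) \<omega>) (\<xi> (g N l') \<omega>))" by measurable
qed

lemma meas_hit:
  assumes N: "0 < N" and ij: "i < j" "j \<le> N"
  shows "{\<omega>\<in>space M. hit T \<xi> N b i \<omega> = j} \<in> sets (F (g N j))"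
proof -
  have "Measurable.pred (F (g N j)) (\<lambda>\<omega>. b \<le> dist (\<xi> (g N j) \<omega>) (\<xi> (g N i) \<omega>) \<and>
     (\<forall>l\<in>{i<..<j}. dist (\<xi> (g N l) \<omega>) (\<xi> (g N i) \<omega>) < b))"
    using N ij by (intro pred_intros_logic(3) pred_intros_finite(3) pred_dist) auto
  then have "{\<omega>\<in>space (F (g N j)). b \<le> dist (\<xi> (g N j) \<omega>) (\<xi> (g N i) \<omega>) \<and>
     (\<forall>l\<in>{i<..<j}. dist (\<xi> (g N l) \<omega>) (\<xi> (g N i) \<omega>) < b)} \<in> sets (F (g N j))"
    by (simp add: pred_def)
  moreover have "{\<omega>\<in>space M. hit T \<xi> N b i \<omega> = j} = {\<omega>\<in>space (F (g N j)). b \<le> dist (\<xi> (g N j) \<omega>) (\<xi> (g N i) \<omega>) \<and>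
     (\<forall>l\<in>{i<..<j}. dist (\<xi> (g N l) \<omega>) (\<xi> (g N i) \<omega>) < b)}"
    using hit_eq_iff[OF ij, where T=T and \<xi>=\<xi> and b=b] space_F by (auto simp: Ball_def)
  ultimately show ?thesis by simp
qed

lemma meas_idx:
  assumes N: "0 < N" and j: "j \<le> N"
  shows "{\<omega>\<in>space M. idx T \<xi> N b k \<omega> = j} \<in> sets (F (g N j))"
  using j
proof (induction k arbitrary: j)
  case 0
  show ?case
  proof (cases "j = 0")
    case True
    then show ?thesis using sets.top[of "F (g N j)"] space_F by simp
  next
    case False then show ?thesis by simp
  qed
next
  case (Suc k)
  have "{\<omega>\<in>space M. idx T \<xi> N b (Suc k) \<omega> = j} =
      (\<Union>i\<in>{..<j}. {\<omega>\<in>space M. idx T \<xi> N b k \<omega> = i} \<inter> {\<omega>\<in>space M. hit T \<xi> N b i \<omega> = j})"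
  proof -
    have "i < j" if "hit T \<xi> N b i \<omega> = j" for i \<omega>
    proof -
      have "i \<le> N \<or> i > N" by auto
      then show ?thesis
      proof
        assume "i \<le> N" then show ?thesis using hit_gt[of i N T \<xi> b \<omega>] that by simp
      next
        assume "i > N"
        then have "\<not> (\<exists>j'. i < j' \<and> j' \<le> N \<and> b \<le> dist (\<xi> (grid T N j') \<omega>) (\<xi> (grid T N i) \<omega>))" by auto
        then have "hit T \<xi> N b i \<omega> = Suc N" by (rule hit_none)
        then show ?thesis using that Suc.prems by simp
      qed
    qed
    then show ?thesis by auto
  qed
  moreover have "{\<omega>\<in>space M. idx T \<xi> N b k \<omega> = i} \<inter> {\<omega>\<in>space M. hit T \<xi> N b i \<omega> = j} \<in> sets (F (g N j))"
    if "i < j" for i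
  proof -
    have "{\<omega>\<in>space M. idx T \<xi> N b k \<omega> = i} \<in> sets (F (g N i))" using Suc.IH[of i] that Suc.prems by simp
    also have "\<dots> \<subseteq> sets (F (g N j))" using F_mono grid_mono N that by simp
    finally show ?thesis using meas_hit[OF N that Suc.prems] by auto
  qed
  ultimately show ?case by auto
qed

end

sublocale SM \<subseteq> pM: prob_space M by (rule prob)

context SM begin

lemma hit_gt_i: "i \<le> N \<Longrightarrow> i < hit T \<xi> N b i \<omega>" by (rule hit_gt)

lemma ottaviani:
  assumes N: "0 < N" and iN: "i \<le> N" and B: "B \<in> sets (F (g N i))" and b: "2 * c \<le> b"
    and c: "0 < c'" "c' < c"
    and m: "i \<le> m" "m \<le> N" "g N m - g N i \<le> h"
    and al: "\<And>s t x. 0 \<le> s \<Longrightarrow> s \<le> t \<Longrightarrow> t \<le> T \<Longrightarrow> t - s \<le> h \<Longrightarrow>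
               measure (P s t x) {y. c' \<le> dist x y} \<le> \<alpha>"
  shows "measure M {\<omega>\<in>B. hit T \<xi> N b i \<omega> \<le> m} \<le>
           \<alpha> * measure M B + \<alpha> * measure M {\<omega>\<in>B. hit T \<xi> N b i \<omega> \<le> m}"
proof -
  let ?h = "\<lambda>\<omega>. hit T \<xi> N b i \<omega>"
  define E where "E = {\<omega>\<in>B. ?h \<omega> \<le> m}"
  define H where "H j = {\<omega>\<in>B. ?h \<omega> = j}" for j
  have Bsp: "B \<subseteq> space M" using B sets.sets_into_space space_F by blast
  have HF: "H j \<in> sets (F (g N j))" if "i < j" "j \<le> m" for j
  proof -
    have "B \<in> sets (F (g N j))" using B F_mono[of "g N i" "g N j"] grid_mono[OF N, of i j] that by auto
    moreover have "H j = B \<inter> {\<omega>\<in>space M. ?h \<omega> = j}" using Bsp by (auto simp: H_def)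
    ultimately show ?thesis using meas_hit[OF N that(1)] that m by auto
  qed
  have HM: "H j \<in> sets M" if "i < j" "j \<le> m" for j using HF[OF that] F_sub by blast
  have EH: "E = (\<Union>j\<in>{i<..m}. H j)"
    using hit_gt_i[OF iN] by (auto simp: E_def H_def)
  have Hdisj: "disjoint_family_on H {i<..m}" by (auto simp: disjoint_family_on_def H_def)
  have mE: "measure M E = (\<Sum>j\<in>{i<..m}. measure M (H j))"
    unfolding EH by (rule measure_finite_Union) (use HM Hdisj pM.emeasure_finite in auto)
  define E0 where "E0 = {\<omega>\<in>B. c \<le> dist (\<xi> (g N m) \<omega>) (\<xi> (g N i) \<omega>)}"
  define E1 where "E1 j = {\<omega>\<in>H j. c \<le> dist (\<xi> (g N m) \<omega>) (\<xi> (g N j) \<omega>)}" for j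
  have gi: "0 \<le> g N i" "g N i \<le> g N m" "g N m \<le> T"
    using grid_nonneg grid_mono[OF N m(1)] grid_le_T[OF N m(2)] by auto
  have E0le: "measure M E0 \<le> \<alpha> * measure M B"
    unfolding E0_def by (rule markov_bound[OF B gi c]) (rule al, use gi m in auto)
  have E1le: "measure M (E1 j) \<le> \<alpha> * measure M (H j)" if j: "i < j" "j \<le> m" for j
  proof -
    have gj: "0 \<le> g N j" "g N j \<le> g N m" "g N m \<le> T"
      using grid_nonneg grid_mono[OF N j(2)] grid_le_T[OF N m(2)] by auto
    have gij: "g N i \<le> g N j" using grid_mono[OF N] j by simp
    show ?thesis
      unfolding E1_def by (rule markov_bound[OF HF[OF j] gj c]) (rule al, use gj gij m in auto)
  qed
  have E0M: "E0 \<in> sets M"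
  proof -
    have [measurable]: "\<xi> (g N m) \<in> borel_measurable M" "\<xi> (g N i) \<in> borel_measurable M"
      using xi_meas gi grid_nonneg by auto
    have "{\<omega>\<in>space M. c \<le> dist (\<xi> (g N m) \<omega>) (\<xi> (g N i) \<omega>)} \<in> sets M" by measurable
    moreover have "E0 = B \<inter> {\<omega>\<in>space M. c \<le> dist (\<xi> (g N m) \<omega>) (\<xi> (g N i) \<omega>)}"
      using Bsp by (auto simp: E0_def)
    moreover have "B \<in> sets M" using B F_sub by blast
    ultimately show ?thesis by auto
  qed
  have E1M: "E1 j \<in> sets M" if j: "i < j" "j \<le> m" for j
  proof -
    have [measurable]: "\<xi> (g N m) \<in> borel_measurable M" "\<xi> (g N j) \<in> borel_measurable M"
      using xi_meas gi grid_nonneg grid_le_T[OF N] j m by auto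
    have "{\<omega>\<in>space M. c \<le> dist (\<xi> (g N m) \<omega>) (\<xi> (g N j) \<omega>)} \<in> sets M" by measurable
    moreover have "E1 j = H j \<inter> {\<omega>\<in>space M. c \<le> dist (\<xi> (g N m) \<omega>) (\<xi> (g N j) \<omega>)}"
      using Bsp by (auto simp: E1_def H_def)
    ultimately show ?thesis using HM[OF j] by auto
  qed
  have sub: "E \<subseteq> E0 \<union> (\<Union>j\<in>{i<..m}. E1 j)"
  proof
    fix \<omega> assume "\<omega> \<in> E"
    then obtain j where j: "j \<in> {i<..m}" "\<omega> \<in> H j" using EH by blast
    then have "b \<le> dist (\<xi> (g N j) \<omega>) (\<xi> (g N i) \<omega>)"
      using hit_eq_iff[of i j N T \<xi> b \<omega>] m by (auto simp: H_def)
    moreover have "dist (\<xi> (g N j) \<omega>) (\<xi> (g N i) \<omega>) \<le>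
        dist (\<xi> (g N m) \<omega>) (\<xi> (g N j) \<omega>) + dist (\<xi> (g N m) \<omega>) (\<xi> (g N i) \<omega>)"
      by (rule dist_triangle3)
    ultimately have "c \<le> dist (\<xi> (g N m) \<omega>) (\<xi> (g N j) \<omega>) \<or> c \<le> dist (\<xi> (g N m) \<omega>) (\<xi> (g N i) \<omega>)"
      using b by linarith
    then show "\<omega> \<in> E0 \<union> (\<Union>j\<in>{i<..m}. E1 j)"
      using j by (auto simp: E0_def E1_def H_def)
  qed
  have "measure M E \<le> measure M (E0 \<union> (\<Union>j\<in>{i<..m}. E1 j))"
    using sub E0M E1M by (intro pM.finite_measure_mono) auto
  also have "\<dots> \<le> measure M E0 + measure M (\<Union>j\<in>{i<..m}. E1 j)"
    using E0M E1M by (intro measure_Un_le) auto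
  also have "measure M (\<Union>j\<in>{i<..m}. E1 j) \<le> (\<Sum>j\<in>{i<..m}. measure M (E1 j))"
    using E1M by (intro measure_UNION_le) auto
  also have "\<dots> \<le> (\<Sum>j\<in>{i<..m}. \<alpha> * measure M (H j))"
    using E1le by (intro sum_mono) auto
  also have "\<dots> = \<alpha> * measure M E" by (simp add: mE sum_distrib_left)
  finally show ?thesis using E0le by (simp add: E_def)
qed

end

lemma exp_staircase:
  fixes \<sigma> h1 h2 h3 :: real
  assumes "0 \<le> \<sigma>" "0 \<le> h1" "h1 \<le> h2" "h2 \<le> h3"
  shows "exp (-\<sigma>) \<le> exp (-h3) + (1 - exp (-h1)) * (if \<sigma> \<le> h1 then 1 else 0)
     + (exp (-h1) - exp (-h2)) * (if \<sigma> \<le> h2 then 1 else 0) + (exp (-h2) - exp (-h3)) * (if \<sigma> \<le> h3 then 1 else 0)"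
proof -
  have m: "exp (-y) \<le> exp (-x)" if "x \<le> y" for x y :: real using that by simp
  show ?thesis
  proof (cases "\<sigma> \<le> h1")
    case True then show ?thesis using assms m[of 0 \<sigma>] by auto
  next
    case f1: False
    show ?thesis
    proof (cases "\<sigma> \<le> h2")
      case True then show ?thesis using f1 assms m[of h1 \<sigma>] by auto
    next
      case f2: False
      show ?thesis
      proof (cases "\<sigma> \<le> h3")
        case True then show ?thesis using f1 f2 assms m[of h2 \<sigma>] by auto
      next
        case False then show ?thesis using f1 f2 assms m[of h3 \<sigma>] by auto
      qed
    qed
  qed
qed

context SM begin

lemma level_bound:
  assumes N: "0 < N" and iN: "i \<le> N" and B: "B \<in> sets (F (g N i))" and b: "2 * c \<le> b"
    and c: "0 < c'" "c' < c" and h: "0 \<le> h"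
    and al: "\<And>s t x. 0 \<le> s \<Longrightarrow> s \<le> t \<Longrightarrow> t \<le> T \<Longrightarrow> t - s \<le> h \<Longrightarrow>
               measure (P s t x) {y. c' \<le> dist x y} \<le> \<alpha>"
    and a1: "\<alpha> < 1"
  shows "(\<Sum>j\<in>{j\<in>{i<..N}. g N j - g N i \<le> h}. measure M {\<omega>\<in>B. hit T \<xi> N b i \<omega> = j})
           \<le> \<alpha> / (1 - \<alpha>) * measure M B"
proof -
  let ?h = "\<lambda>\<omega>. hit T \<xi> N b i \<omega>"
  define H where "H j = {\<omega>\<in>B. ?h \<omega> = j}" for j
  define m where "m = Max {j. j \<le> N \<and> g N j - g N i \<le> h}"
  have fin: "finite {j. j \<le> N \<and> g N j - g N i \<le> h}" by simp
  have iin: "i \<in> {j. j \<le> N \<and> g N j - g N i \<le> h}" using iN h by simp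
  have min: "m \<in> {j. j \<le> N \<and> g N j - g N i \<le> h}" unfolding m_def using fin iin by (intro Max_in) auto
  have im: "i \<le> m" unfolding m_def using fin iin by (rule Max_ge)
  have mN: "m \<le> N" "g N m - g N i \<le> h" using min by auto
  have iff: "j \<le> m \<longleftrightarrow> g N j - g N i \<le> h" if "j \<le> N" for j
  proof
    assume "j \<le> m" then show "g N j - g N i \<le> h" using grid_mono[OF N, of j m] mN by simp
  next
    assume "g N j - g N i \<le> h" then show "j \<le> m" unfolding m_def using fin that by (intro Max_ge) auto
  qed
  have Bsp: "B \<subseteq> space M" using B sets.sets_into_space space_F by blast
  have HM: "H j \<in> sets M" if "i < j" "j \<le> N" for j
  proof -
    have "B \<in> sets (F (g N j))" using B F_mono[of "g N i" "g N j"] grid_mono[OF N, of i j] that by auto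
    moreover have "H j = B \<inter> {\<omega>\<in>space M. ?h \<omega> = j}" using Bsp by (auto simp: H_def)
    ultimately have "H j \<in> sets (F (g N j))" using meas_hit[OF N that] by auto
    then show ?thesis using F_sub by blast
  qed
  have set_eq: "{j\<in>{i<..N}. g N j - g N i \<le> h} = {i<..m}"
  proof safe
    fix x assume "x \<in> {i<..m}"
    then show "g N x - g N i \<le> h" using iff[of x] mN by auto
  qed (use iff mN in auto)
  have "{\<omega>\<in>B. ?h \<omega> \<le> m} = (\<Union>j\<in>{i<..m}. H j)"
    using hit_gt_i[OF iN] by (auto simp: H_def)
  then have mE: "measure M {\<omega>\<in>B. ?h \<omega> \<le> m} = (\<Sum>j\<in>{i<..m}. measure M (H j))"
    by simp (rule measure_finite_Union, use HM mN pM.emeasure_finite in \<open>auto simp: disjoint_family_on_def H_def\<close>)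
  have ot: "measure M {\<omega>\<in>B. ?h \<omega> \<le> m} \<le> \<alpha> * measure M B + \<alpha> * measure M {\<omega>\<in>B. ?h \<omega> \<le> m}"
    by (rule ottaviani[OF N iN B b c im mN al]) auto
  have "measure (P 0 0 undefined) {y. c' \<le> dist undefined y} \<le> \<alpha>" using al[of 0 0 undefined] Tpos h by simp
  then have a0: "0 \<le> \<alpha>" by (meson measure_nonneg order_trans)
  have "measure M {\<omega>\<in>B. ?h \<omega> \<le> m} * (1 - \<alpha>) \<le> \<alpha> * measure M B" using ot by (simp add: algebra_simps)
  then have "measure M {\<omega>\<in>B. ?h \<omega> \<le> m} \<le> \<alpha> / (1 - \<alpha>) * measure M B"
    using a1 by (simp add: field_simps)
  then show ?thesis using mE set_eq by (simp add: H_def)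
qed

lemma total_bound:
  assumes N: "0 < N" and iN: "i \<le> N" and B: "B \<in> sets (F (g N i))"
  shows "(\<Sum>j\<in>{i<..N}. measure M {\<omega>\<in>B. hit T \<xi> N b i \<omega> = j}) \<le> measure M B"
proof -
  let ?h = "\<lambda>\<omega>. hit T \<xi> N b i \<omega>"
  define H where "H j = {\<omega>\<in>B. ?h \<omega> = j}" for j
  have Bsp: "B \<subseteq> space M" using B sets.sets_into_space space_F by blast
  have BM: "B \<in> sets M" using B F_sub by blast
  have HM: "H j \<in> sets M" if "i < j" "j \<le> N" for j
  proof -
    have "B \<in> sets (F (g N j))" using B F_mono[of "g N i" "g N j"] grid_mono[OF N, of i j] that by auto
    moreover have "H j = B \<inter> {\<omega>\<in>space M. ?h \<omega> = j}" using Bsp by (auto simp: H_def)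
    ultimately have "H j \<in> sets (F (g N j))" using meas_hit[OF N that] by auto
    then show ?thesis using F_sub by blast
  qed
  have "(\<Sum>j\<in>{i<..N}. measure M (H j)) = measure M (\<Union>j\<in>{i<..N}. H j)"
    by (rule measure_finite_Union[symmetric], use HM pM.emeasure_finite in \<open>auto simp: disjoint_family_on_def H_def\<close>)
  also have "\<dots> \<le> measure M B"
    using BM by (intro pM.finite_measure_mono) (auto simp: H_def)
  finally show ?thesis by (simp add: H_def)
qed

end

lemma sum_ind:
  fixes \<mu> :: "nat \<Rightarrow> real"
  assumes "finite S"
  shows "(\<Sum>j\<in>S. w * (if Q j then 1 else 0) * \<mu> j) = w * (\<Sum>j\<in>{j\<in>S. Q j}. \<mu> j)"
proof -
  have "(\<Sum>j\<in>{j\<in>S. Q j}. \<mu> j) = (\<Sum>j\<in>S. if Q j then \<mu> j else 0)"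
    by (rule sum.inter_filter[OF assms])
  then show ?thesis by (simp add: sum_distrib_left) (rule sum.cong, auto)
qed

locale core = SM M F \<xi> P T
  for M :: "'b measure" and F \<xi> P T +
  fixes N :: nat and b c c' h1 h2 h3 \<alpha>1 \<alpha>2 \<alpha>3 :: real
  assumes N: "0 < N" and bc: "2 * c \<le> b" and c: "0 < c'" "c' < c"
    and hs: "0 \<le> h1" "h1 \<le> h2" "h2 \<le> h3"
    and al1: "\<And>s t x. 0 \<le> s \<Longrightarrow> s \<le> t \<Longrightarrow> t \<le> T \<Longrightarrow> t - s \<le> h1 \<Longrightarrow>
               measure (P s t x) {y. c' \<le> dist x y} \<le> \<alpha>1"
    and al2: "\<And>s t x. 0 \<le> s \<Longrightarrow> s \<le> t \<Longrightarrow> t \<le> T \<Longrightarrow> t - s \<le> h2 \<Longrightarrow>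
               measure (P s t x) {y. c' \<le> dist x y} \<le> \<alpha>2"
    and al3: "\<And>s t x. 0 \<le> s \<Longrightarrow> s \<le> t \<Longrightarrow> t \<le> T \<Longrightarrow> t - s \<le> h3 \<Longrightarrow>
               measure (P s t x) {y. c' \<le> dist x y} \<le> \<alpha>3"
    and a1: "\<alpha>1 < 1" "\<alpha>2 < 1" "\<alpha>3 < 1"
begin

definition "qq = exp (-h3) + (1 - exp (-h1)) * (\<alpha>1 / (1 - \<alpha>1)) + (exp (-h1) - exp (-h2)) * (\<alpha>2 / (1 - \<alpha>2))
   + (exp (-h2) - exp (-h3)) * (\<alpha>3 / (1 - \<alpha>3))"

lemma per_i:
  assumes iN: "i \<le> N" and B: "B \<in> sets (F (g N i))"
  shows "(\<Sum>j\<in>{i<..N}. exp (-(g N j - g N i)) * measure M {\<omega>\<in>B. hit T \<xi> N b i \<omega> = j}) \<le> qq * measure M B"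
proof -
  define \<mu> where "\<mu> j = measure M {\<omega>\<in>B. hit T \<xi> N b i \<omega> = j}" for j
  define \<sigma> where "\<sigma> j = g N j - g N i" for j
  define w1 where "w1 = 1 - exp (-h1)"
  define w2 where "w2 = exp (-h1) - exp (-h2)"
  define w3 where "w3 = exp (-h2) - exp (-h3)"
  have w: "0 \<le> w1" "0 \<le> w2" "0 \<le> w3" using hs by (auto simp: w1_def w2_def w3_def)
  let ?S = "{i<..N}"
  have "(\<Sum>j\<in>?S. exp (-\<sigma> j) * \<mu> j) \<le> (\<Sum>j\<in>?S. (exp (-h3) + w1 * (if \<sigma> j \<le> h1 then 1 else 0)
     + w2 * (if \<sigma> j \<le> h2 then 1 else 0) + w3 * (if \<sigma> j \<le> h3 then 1 else 0)) * \<mu> j)"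
  proof (rule sum_mono)
    fix j assume "j \<in> ?S"
    then have "0 \<le> \<sigma> j" using grid_mono[OF N, of i j] by (simp add: \<sigma>_def)
    then show "exp (-\<sigma> j) * \<mu> j \<le> (exp (-h3) + w1 * (if \<sigma> j \<le> h1 then 1 else 0)
     + w2 * (if \<sigma> j \<le> h2 then 1 else 0) + w3 * (if \<sigma> j \<le> h3 then 1 else 0)) * \<mu> j"
      using exp_staircase[of "\<sigma> j" h1 h2 h3] hs
      by (intro mult_right_mono) (auto simp: w1_def w2_def w3_def \<mu>_def)
  qed
  also have "\<dots> = exp (-h3) * (\<Sum>j\<in>?S. \<mu> j) + w1 * (\<Sum>j\<in>{j\<in>?S. \<sigma> j \<le> h1}. \<mu> j)
      + w2 * (\<Sum>j\<in>{j\<in>?S. \<sigma> j \<le> h2}. \<mu> j) + w3 * (\<Sum>j\<in>{j\<in>?S. \<sigma> j \<le> h3}. \<mu> j)"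
  proof -
    have "(\<Sum>j\<in>?S. (exp (-h3) + w1 * (if \<sigma> j \<le> h1 then 1 else 0)
     + w2 * (if \<sigma> j \<le> h2 then 1 else 0) + w3 * (if \<sigma> j \<le> h3 then 1 else 0)) * \<mu> j)
     = (\<Sum>j\<in>?S. exp (-h3) * \<mu> j) + (\<Sum>j\<in>?S. w1 * (if \<sigma> j \<le> h1 then 1 else 0) * \<mu> j)
     + (\<Sum>j\<in>?S. w2 * (if \<sigma> j \<le> h2 then 1 else 0) * \<mu> j) + (\<Sum>j\<in>?S. w3 * (if \<sigma> j \<le> h3 then 1 else 0) * \<mu> j)"
      by (simp only: sum.distrib[symmetric] distrib_right)
    then show ?thesis by (simp only: sum_ind[OF finite_greaterThanAtMost] sum_distrib_left)
  qed
  also have "\<dots> \<le> exp (-h3) * measure M B + w1 * (\<alpha>1 / (1 - \<alpha>1) * measure M B)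
      + w2 * (\<alpha>2 / (1 - \<alpha>2) * measure M B) + w3 * (\<alpha>3 / (1 - \<alpha>3) * measure M B)"
  proof -
    have "(\<Sum>j\<in>?S. \<mu> j) \<le> measure M B" unfolding \<mu>_def by (rule total_bound[OF N iN B])
    moreover have "(\<Sum>j\<in>{j\<in>?S. \<sigma> j \<le> h1}. \<mu> j) \<le> \<alpha>1 / (1 - \<alpha>1) * measure M B"
      unfolding \<mu>_def \<sigma>_def by (rule level_bound[OF N iN B bc c hs(1) al1 a1(1)])
    moreover have "(\<Sum>j\<in>{j\<in>?S. \<sigma> j \<le> h2}. \<mu> j) \<le> \<alpha>2 / (1 - \<alpha>2) * measure M B"
      unfolding \<mu>_def \<sigma>_def using hs by (intro level_bound[OF N iN B bc c _ al2 a1(2)]) auto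
    moreover have "(\<Sum>j\<in>{j\<in>?S. \<sigma> j \<le> h3}. \<mu> j) \<le> \<alpha>3 / (1 - \<alpha>3) * measure M B"
      unfolding \<mu>_def \<sigma>_def using hs by (intro level_bound[OF N iN B bc c _ al3 a1(3)]) auto
    ultimately show ?thesis using w
      by (intro add_mono mult_left_mono) auto
  qed
  also have "\<dots> = qq * measure M B"
  proof -
    define p1 where "p1 = \<alpha>1 / (1 - \<alpha>1)"
    define p2 where "p2 = \<alpha>2 / (1 - \<alpha>2)"
    define p3 where "p3 = \<alpha>3 / (1 - \<alpha>3)"
    have "qq = exp (-h3) + w1 * p1 + w2 * p2 + w3 * p3"
      by (simp add: qq_def w1_def w2_def w3_def p1_def p2_def p3_def)
    then show ?thesis unfolding p1_def[symmetric] p2_def[symmetric] p3_def[symmetric]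
      by (simp add: algebra_simps)
  qed
  finally show ?thesis by (simp add: \<mu>_def \<sigma>_def)
qed

end

lemma geom_le:
  fixes q :: real
  assumes "0 \<le> q" "q < 1"
  shows "(\<Sum>k\<in>{1..n}. q ^ k) \<le> q / (1 - q)"
proof -
  have "(\<Sum>k\<in>{1..n}. q ^ k) = q * (\<Sum>i<n. q ^ i)"
  proof (induction n)
    case (Suc n) then show ?case by (simp add: sum.atLeast1_atMost_eq algebra_simps)
  qed simp
  also have "(\<Sum>i<n. q ^ i) = (1 - q ^ n) / (1 - q)"
    using geometric_sum[of q n] assms by (simp add: field_simps)
  also have "q * ((1 - q ^ n) / (1 - q)) \<le> q * (1 / (1 - q))"
    using assms by (intro mult_left_mono divide_right_mono) auto
  finally show ?thesis by simp
qed

context core begin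

definition "Bk k i = {\<omega>\<in>space M. idx T \<xi> N b k \<omega> = i}"
definition "fv k = (\<Sum>i\<le>N. exp (- g N i) * measure M (Bk k i))"

lemma Bk_F: "i \<le> N \<Longrightarrow> Bk k i \<in> sets (F (g N i))"
  unfolding Bk_def by (rule meas_idx[OF N])

lemma Bk_M: "i \<le> N \<Longrightarrow> Bk k i \<in> sets M"
  using Bk_F F_sub by blast

lemma alpha_nonneg: "0 \<le> \<alpha>1" "0 \<le> \<alpha>2" "0 \<le> \<alpha>3"
proof -
  have "measure (P 0 0 undefined) {y. c' \<le> dist undefined y} \<le> \<alpha>1" using al1[of 0 0 undefined] Tpos hs by simp
  then show "0 \<le> \<alpha>1" by (meson measure_nonneg order_trans)
  have "measure (P 0 0 undefined) {y. c' \<le> dist undefined y} \<le> \<alpha>2" using al2[of 0 0 undefined] Tpos hs by simp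
  then show "0 \<le> \<alpha>2" by (meson measure_nonneg order_trans)
  have "measure (P 0 0 undefined) {y. c' \<le> dist undefined y} \<le> \<alpha>3" using al3[of 0 0 undefined] Tpos hs by simp
  then show "0 \<le> \<alpha>3" by (meson measure_nonneg order_trans)
qed

lemma qq_nonneg: "0 \<le> qq"
proof -
  have "0 \<le> (1 - exp (-h1)) * (\<alpha>1 / (1 - \<alpha>1))" using hs a1 alpha_nonneg by (intro mult_nonneg_nonneg) auto
  moreover have "0 \<le> (exp (-h1) - exp (-h2)) * (\<alpha>2 / (1 - \<alpha>2))" using hs a1 alpha_nonneg by (intro mult_nonneg_nonneg) auto
  moreover have "0 \<le> (exp (-h2) - exp (-h3)) * (\<alpha>3 / (1 - \<alpha>3))" using hs a1 alpha_nonneg by (intro mult_nonneg_nonneg) auto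
  ultimately show ?thesis unfolding qq_def by (smt (verit) exp_gt_zero)
qed

lemma Bk_Suc:
  assumes j: "j \<le> N"
  shows "measure M (Bk (Suc k) j) = (\<Sum>i<j. measure M {\<omega>\<in>Bk k i. hit T \<xi> N b i \<omega> = j})"
proof -
  have eq: "Bk (Suc k) j = (\<Union>i\<in>{..<j}. {\<omega>\<in>Bk k i. hit T \<xi> N b i \<omega> = j})"
  proof -
    have "i < j" if "hit T \<xi> N b i \<omega> = j" for i \<omega>
    proof (cases "i \<le> N")
      case True then show ?thesis using hit_gt[of i N T \<xi> b \<omega>] that by simp
    next
      case False
      then have "\<not> (\<exists>j'. i < j' \<and> j' \<le> N \<and> b \<le> dist (\<xi> (grid T N j') \<omega>) (\<xi> (grid T N i) \<omega>))" by auto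
      then have "hit T \<xi> N b i \<omega> = Suc N" by (rule hit_none)
      then show ?thesis using that j by simp
    qed
    then show ?thesis by (auto simp: Bk_def)
  qed
  have meas: "{\<omega>\<in>Bk k i. hit T \<xi> N b i \<omega> = j} \<in> sets M" if "i < j" for i
  proof -
    have "Bk k i \<in> sets (F (g N i))" using Bk_F that j by simp
    also have "\<dots> \<subseteq> sets (F (g N j))" using F_mono grid_mono[OF N] that by simp
    finally have "Bk k i \<inter> {\<omega>\<in>space M. hit T \<xi> N b i \<omega> = j} \<in> sets (F (g N j))"
      using meas_hit[OF N that j] by auto
    moreover have "Bk k i \<inter> {\<omega>\<in>space M. hit T \<xi> N b i \<omega> = j} = {\<omega>\<in>Bk k i. hit T \<xi> N b i \<omega> = j}"
      by (auto simp: Bk_def)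
    ultimately show ?thesis using F_sub by auto
  qed
  show ?thesis unfolding eq
  proof (rule measure_finite_Union)
    show "(\<lambda>i. {\<omega> \<in> Bk k i. hit T \<xi> N b i \<omega> = j}) ` {..<j} \<subseteq> sets M" using meas by auto
    show "disjoint_family_on (\<lambda>i. {\<omega> \<in> Bk k i. hit T \<xi> N b i \<omega> = j}) {..<j}"
      unfolding disjoint_family_on_def Bk_def by blast
    show "emeasure M {\<omega> \<in> Bk k i. hit T \<xi> N b i \<omega> = j} \<noteq> \<infinity>" for i by (simp add: pM.emeasure_eq_measure)
  qed simp
qed

lemma fv_Suc: "fv (Suc k) \<le> qq * fv k"
proof -
  let ?H = "\<lambda>i j. measure M {\<omega>\<in>Bk k i. hit T \<xi> N b i \<omega> = j}"
  have "fv (Suc k) = (\<Sum>j\<le>N. \<Sum>i<j. exp (- g N j) * ?H i j)"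
    unfolding fv_def by (intro sum.cong refl) (simp add: Bk_Suc sum_distrib_left)
  also have "\<dots> = (\<Sum>i<N. \<Sum>j\<in>{Suc i..N}. exp (- g N j) * ?H i j)"
    by (rule sum.nested_swap')
  also have "\<dots> = (\<Sum>i<N. exp (- g N i) * (\<Sum>j\<in>{i<..N}. exp (-(g N j - g N i)) * ?H i j))"
  proof (intro sum.cong refl)
    fix i assume "i \<in> {..<N}"
    have e: "{Suc i..N} = {i<..N}" by auto
    have "exp (- g N j) * ?H i j = exp (- g N i) * (exp (-(g N j - g N i)) * ?H i j)" for j
    proof -
      have "exp (- g N i) * exp (-(g N j - g N i)) = exp (- g N j)" by (simp add: exp_add[symmetric])
      then show ?thesis by (simp add: mult.assoc[symmetric])
    qed
    then show "(\<Sum>j\<in>{Suc i..N}. exp (- g N j) * ?H i j) =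
        exp (- g N i) * (\<Sum>j\<in>{i<..N}. exp (-(g N j - g N i)) * ?H i j)"
      unfolding e sum_distrib_left by (intro sum.cong refl)
  qed
  also have "\<dots> \<le> (\<Sum>i<N. exp (- g N i) * (qq * measure M (Bk k i)))"
    by (intro sum_mono mult_left_mono per_i Bk_F) auto
  also have "\<dots> \<le> (\<Sum>i\<le>N. exp (- g N i) * (qq * measure M (Bk k i)))"
    by (intro sum_mono2) (auto intro!: mult_nonneg_nonneg qq_nonneg)
  also have "\<dots> = qq * fv k" by (simp add: fv_def sum_distrib_left algebra_simps)
  finally show ?thesis .
qed

lemma fv_0: "fv 0 = 1"
proof -
  have "fv 0 = (\<Sum>i\<le>N. if i = 0 then 1 else 0)"
    unfolding fv_def by (intro sum.cong refl) (auto simp: Bk_def pM.prob_space)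
  also have "\<dots> = 1" by simp
  finally show ?thesis .
qed

lemma fv_le: "fv k \<le> qq ^ k"
proof (induction k)
  case 0 then show ?case by (simp add: fv_0)
next
  case (Suc k)
  have "fv (Suc k) \<le> qq * fv k" by (rule fv_Suc)
  also have "\<dots> \<le> qq * qq ^ k" using Suc qq_nonneg by (intro mult_left_mono) auto
  finally show ?case by simp
qed

lemma prob_idx_le: "measure M {\<omega>\<in>space M. idx T \<xi> N b k \<omega> \<le> N} \<le> exp T * qq ^ k"
proof -
  have "{\<omega>\<in>space M. idx T \<xi> N b k \<omega> \<le> N} = (\<Union>i\<in>{..N}. Bk k i)" by (auto simp: Bk_def)
  then have "measure M {\<omega>\<in>space M. idx T \<xi> N b k \<omega> \<le> N} = (\<Sum>i\<le>N. measure M (Bk k i))"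
  proof -
    have "measure M (\<Union>i\<in>{..N}. Bk k i) = (\<Sum>i\<le>N. measure M (Bk k i))"
    proof (rule measure_finite_Union)
      show "Bk k ` {..N} \<subseteq> sets M" using Bk_M by auto
      show "disjoint_family_on (Bk k) {..N}" unfolding disjoint_family_on_def Bk_def by blast
      show "emeasure M (Bk k i) \<noteq> \<infinity>" for i by (simp add: pM.emeasure_eq_measure)
    qed simp
    then show ?thesis using \<open>{\<omega>\<in>space M. idx T \<xi> N b k \<omega> \<le> N} = (\<Union>i\<in>{..N}. Bk k i)\<close> by simp
  qed
  also have "\<dots> \<le> (\<Sum>i\<le>N. exp T * (exp (- g N i) * measure M (Bk k i)))"
  proof (intro sum_mono)
    fix i assume "i \<in> {..N}"
    then have "g N i \<le> T" using grid_le_T[OF N] by simp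
    then have e1: "1 \<le> exp T * exp (- g N i)" by (simp add: exp_add[symmetric])
    show "measure M (Bk k i) \<le> exp T * (exp (- g N i) * measure M (Bk k i))"
      using mult_right_mono[OF e1 measure_nonneg[of M "Bk k i"]] by (simp add: mult.assoc)
  qed
  also have "\<dots> = exp T * fv k" by (simp add: fv_def sum_distrib_left)
  also have "\<dots> \<le> exp T * qq ^ k" using fv_le by simp
  finally show ?thesis .
qed

lemma count_bound:
  assumes q1: "qq < 1"
  shows "(\<integral>\<^sup>+\<omega>. (\<Sum>k\<in>{1..N}. indicator {\<omega>\<in>space M. idx T \<xi> N b k \<omega> \<le> N} \<omega>) \<partial>M)
           \<le> ennreal (exp T * (qq / (1 - qq)))"
proof -
  have ms: "{\<omega>\<in>space M. idx T \<xi> N b k \<omega> \<le> N} \<in> sets M" for k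
  proof -
    have "{\<omega>\<in>space M. idx T \<xi> N b k \<omega> \<le> N} = (\<Union>i\<in>{..N}. Bk k i)" by (auto simp: Bk_def)
    then show ?thesis using Bk_M by auto
  qed
  have "(\<integral>\<^sup>+\<omega>. (\<Sum>k\<in>{1..N}. indicator {\<omega>\<in>space M. idx T \<xi> N b k \<omega> \<le> N} \<omega>) \<partial>M)
      = (\<Sum>k\<in>{1..N}. emeasure M {\<omega>\<in>space M. idx T \<xi> N b k \<omega> \<le> N})"
    using ms by (simp add: nn_integral_sum)
  also have "\<dots> = (\<Sum>k\<in>{1..N}. ennreal (measure M {\<omega>\<in>space M. idx T \<xi> N b k \<omega> \<le> N}))"
    by (simp add: pM.emeasure_eq_measure)
  also have "\<dots> = ennreal (\<Sum>k\<in>{1..N}. measure M {\<omega>\<in>space M. idx T \<xi> N b k \<omega> \<le> N})"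
    by (rule sum_ennreal) simp
  also have "\<dots> \<le> ennreal (\<Sum>k\<in>{1..N}. exp T * qq ^ k)"
    by (intro ennreal_leI sum_mono prob_idx_le)
  also have "\<dots> \<le> ennreal (exp T * (qq / (1 - qq)))"
  proof (intro ennreal_leI)
    have "(\<Sum>k\<in>{1..N}. exp T * qq ^ k) = exp T * (\<Sum>k\<in>{1..N}. qq ^ k)" by (simp add: sum_distrib_left)
    also have "\<dots> \<le> exp T * (qq / (1 - qq))" using geom_le[OF qq_nonneg q1, of N] by (intro mult_left_mono) auto
    finally show "(\<Sum>k\<in>{1..N}. exp T * qq ^ k) \<le> exp T * (qq / (1 - qq))" .
  qed
  finally show ?thesis .
qed

end

lemma grid_mono_T: "0 < T \<Longrightarrow> i \<le> j \<Longrightarrow> grid T N i \<le> grid T N j"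
  unfolding grid_def by (intro divide_right_mono mult_left_mono) auto

lemma ev_small: "0 < \<delta> \<Longrightarrow> eventually (\<lambda>n. T / real (Suc n) < \<delta>) sequentially"
proof -
  assume d: "0 < \<delta>"
  obtain n0 :: nat where n0: "T / \<delta> < real n0" using reals_Archimedean2 by blast
  show ?thesis unfolding eventually_sequentially
  proof (intro exI allI impI)
    fix n assume "n0 \<le> n"
    then have "T / \<delta> < real (Suc n)" using n0 by linarith
    then have "T < \<delta> * real (Suc n)" using d by (simp add: field_simps)
    then show "T / real (Suc n) < \<delta>" by (simp add: field_simps)
  qed
qed

lemma ceil_grid:
  fixes T x :: real and N :: nat
  assumes T: "0 < T" and N: "0 < N" and x: "0 \<le> x" "x \<le> T"
  defines "J \<equiv> nat \<lceil>x * real N / T\<rceil>"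
  shows "x \<le> grid T N J" "grid T N J < x + T / real N" "J \<le> N"
proof -
  have y0: "0 \<le> x * real N / T" using x T by simp
  have rJ: "real J = real_of_int \<lceil>x * real N / T\<rceil>" using y0 by (simp add: J_def)
  have "x * real N / T \<le> real J" using rJ by linarith
  then have "x * real N \<le> real J * T" using T by (simp add: field_simps)
  then show "x \<le> grid T N J" using N by (simp add: grid_def field_simps)
  have "real J < x * real N / T + 1" using rJ by linarith
  then have "real J * T < x * real N + T" using T by (simp add: field_simps)
  then show "grid T N J < x + T / real N" using N by (simp add: grid_def field_simps)
  have "x * real N \<le> T * real N" using x by (intro mult_right_mono) auto
  then have "x * real N / T \<le> real N" using T by (simp add: pos_divide_le_eq mult.commute)
  then have "\<lceil>x * real N / T\<rceil> \<le> int N" by (subst ceiling_le_iff) simp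
  then show "J \<le> N" unfolding J_def by linarith
qed

lemma det_bound:
  fixes \<xi> :: "real \<Rightarrow> 'b \<Rightarrow> 'a::metric_space"
  assumes T: "0 < T" and rc: "\<forall>s\<in>{0..<T}. continuous (at_right s) (\<lambda>s. \<xi> s \<omega>)"
    and b: "0 < b" "2 * b < Mr r" and \<kappa>: "\<kappa> \<in> partitions T"
  shows "eventually (\<lambda>n. card (Kset \<xi> r \<omega> \<kappa>) \<le> card {l\<in>{1..Suc n}. idx T \<xi> (Suc n) b l \<omega> \<le> Suc n}) sequentially"
proof -
  obtain m t where \<kappa>eq: "\<kappa> = (m, t)" by (cases \<kappa>)
  have t0: "t 0 = 0" and tm: "t m = T" and tinc: "\<And>k. k < m \<Longrightarrow> t k < t (Suc k)"
    using \<kappa> by (auto simp: partitions_def \<kappa>eq)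
  have tmono: "t k1 < t k2" if "k1 < k2" "k2 \<le> m" for k1 k2
    using that
  proof (induction k2)
    case (Suc k2)
    then show ?case using tinc[of k2] by (cases "k1 = k2") auto
  qed simp
  have tbd: "0 \<le> t k \<and> t k \<le> T" if "k \<le> m" for k
  proof
    show "0 \<le> t k" using tmono[of 0 k] that t0 by (cases "k = 0") auto
    show "t k \<le> T" using tmono[of k m] that tm by (cases "k = m") auto
  qed
  define \<eta> where "\<eta> = (Mr r - 2 * b) / 2"
  have \<eta>: "0 < \<eta>" using b by (simp add: \<eta>_def)
  define J where "J n k = nat \<lceil>t k * real (Suc n) / T\<rceil>" for n k
  have Jg: "t k \<le> grid T (Suc n) (J n k)" "grid T (Suc n) (J n k) < t k + T / real (Suc n)" "J n k \<le> Suc n"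
    if "k \<le> m" for n k
    using ceil_grid[OF T _ conjunct1[OF tbd[OF that]] conjunct2[OF tbd[OF that]], of "Suc n"]
    by (simp_all add: J_def)
  define gap where "gap = Min ((\<lambda>k. t (Suc k) - t k) ` {..<m})"
  have E1: "eventually (\<lambda>n. \<forall>k<m. J n k < J n (Suc k)) sequentially"
  proof (cases "m = 0")
    case True then show ?thesis by simp
  next
    case False
    have gpos: "0 < gap" unfolding gap_def using False tinc by (subst Min_gr_iff) auto
    have gle: "gap \<le> t (Suc k) - t k" if "k < m" for k unfolding gap_def using that by (intro Min_le) auto
    show ?thesis using ev_small[OF gpos, of T]
    proof (rule eventually_mono)
      fix n assume n: "T / real (Suc n) < gap"
      show "\<forall>k<m. J n k < J n (Suc k)"
      proof (intro allI impI)
        fix k assume k: "k < m"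
        have "grid T (Suc n) (J n k) < t k + T / real (Suc n)" using Jg k by simp
        also have "\<dots> < t (Suc k)" using n gle[OF k] by simp
        also have "\<dots> \<le> grid T (Suc n) (J n (Suc k))" using Jg k by simp
        finally have "grid T (Suc n) (J n k) < grid T (Suc n) (J n (Suc k))" .
        then show "J n k < J n (Suc k)" using grid_mono_T[OF T, of "J n (Suc k)" "J n k" "Suc n"] by linarith
      qed
    qed
  qed
  have E2: "eventually (\<lambda>n. \<forall>k\<in>{..m}. dist (\<xi> (grid T (Suc n) (J n k)) \<omega>) (\<xi> (t k) \<omega>) < \<eta>) sequentially"
  proof (rule eventually_ball_finite, simp, intro ballI)
    fix k assume k: "k \<in> {..m}"
    then have km: "k \<le> m" by simp
    show "eventually (\<lambda>n. dist (\<xi> (grid T (Suc n) (J n k)) \<omega>) (\<xi> (t k) \<omega>) < \<eta>) sequentially"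
    proof (cases "t k < T")
      case True
      then have "continuous (at_right (t k)) (\<lambda>s. \<xi> s \<omega>)" using rc tbd[OF km] by auto
      then have "((\<lambda>s. \<xi> s \<omega>) \<longlongrightarrow> \<xi> (t k) \<omega>) (at_right (t k))" by (simp add: continuous_within)
      then have "eventually (\<lambda>s. dist (\<xi> s \<omega>) (\<xi> (t k) \<omega>) < \<eta>) (at_right (t k))" using \<eta> by (rule tendstoD)
      then obtain d where d: "d > t k" "\<And>y. y > t k \<Longrightarrow> y < d \<Longrightarrow> dist (\<xi> y \<omega>) (\<xi> (t k) \<omega>) < \<eta>"
        unfolding eventually_at_right_field by blast
      have "d - t k > 0" using d by simp
      from ev_small[OF this, of T] show ?thesis
      proof (rule eventually_mono)
        fix n assume n: "T / real (Suc n) < d - t k"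
        have a1: "t k \<le> grid T (Suc n) (J n k)" using Jg km by simp
        have a2: "grid T (Suc n) (J n k) < d" using Jg[OF km, of n] n by simp
        show "dist (\<xi> (grid T (Suc n) (J n k)) \<omega>) (\<xi> (t k) \<omega>) < \<eta>"
        proof (cases "grid T (Suc n) (J n k) = t k")
          case True then show ?thesis using \<eta> by simp
        next
          case False then show ?thesis using a1 a2 d(2) by simp
        qed
      qed
    next
      case False
      then have tk: "t k = T" using tbd[OF km] by simp
      have "grid T (Suc n) (J n k) = T" for n
      proof -
        have "t k * real (Suc n) / T = real (Suc n)" using tk T by simp
        then have "J n k = nat \<lceil>real (Suc n)\<rceil>" by (simp only: J_def)
        then have "J n k = Suc n" by (simp only: ceiling_of_nat nat_int)
        then show ?thesis using T by (simp add: grid_def)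
      qed
      then show ?thesis using tk \<eta> by simp
    qed
  qed
  show ?thesis using eventually_conj[OF E1 E2]
  proof (rule eventually_mono)
    fix n assume H: "(\<forall>k<m. J n k < J n (Suc k)) \<and> (\<forall>k\<in>{..m}. dist (\<xi> (grid T (Suc n) (J n k)) \<omega>) (\<xi> (t k) \<omega>) < \<eta>)"
    let ?N = "Suc n"
    let ?I = "\<lambda>l. idx T \<xi> ?N b l \<omega>"
    have Jmono: "J n k1 < J n k2" if "k1 < k2" "k2 \<le> m" for k1 k2
      using that
    proof (induction k2)
      case (Suc k2)
      then show ?case using H by (cases "k1 = k2") (auto intro: less_trans)
    qed simp
    define S where "S = Kset \<xi> r \<omega> \<kappa>"
    have S: "1 \<le> k \<and> k \<le> m \<and> Mr r \<le> dist (\<xi> (t k) \<omega>) (\<xi> (t (k - 1)) \<omega>)" if "k \<in> S" for k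
      using that by (simp add: S_def Kset_def \<kappa>eq)
    have ex: "\<exists>l. 0 < l \<and> J n (k - 1) < ?I l \<and> ?I l \<le> J n k" if "k \<in> S" for k
    proof (rule greedy[OF b(1)])
      have k: "1 \<le> k" "k \<le> m" using S[OF that] by auto
      show "J n (k - 1) < J n k" using Jmono[of "k - 1" k] k by simp
      show "J n k \<le> ?N" using Jg k by simp
      have d1: "dist (\<xi> (grid T ?N (J n k)) \<omega>) (\<xi> (t k) \<omega>) < \<eta>" using H k by simp
      have d2: "dist (\<xi> (grid T ?N (J n (k - 1))) \<omega>) (\<xi> (t (k - 1)) \<omega>) < \<eta>" using H k by simp
      have d0: "Mr r \<le> dist (\<xi> (t k) \<omega>) (\<xi> (t (k - 1)) \<omega>)" using S[OF that] by simp
      have "dist (\<xi> (t k) \<omega>) (\<xi> (t (k - 1)) \<omega>) \<le>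
          dist (\<xi> (t k) \<omega>) (\<xi> (grid T ?N (J n k)) \<omega>) + dist (\<xi> (grid T ?N (J n k)) \<omega>) (\<xi> (t (k - 1)) \<omega>)"
        by (rule dist_triangle)
      also have "dist (\<xi> (grid T ?N (J n k)) \<omega>) (\<xi> (t (k - 1)) \<omega>) \<le>
          dist (\<xi> (grid T ?N (J n k)) \<omega>) (\<xi> (grid T ?N (J n (k - 1))) \<omega>) + dist (\<xi> (grid T ?N (J n (k - 1))) \<omega>) (\<xi> (t (k - 1)) \<omega>)"
        by (rule dist_triangle)
      finally show "2 * b \<le> dist (\<xi> (grid T ?N (J n k)) \<omega>) (\<xi> (grid T ?N (J n (k - 1))) \<omega>)"
        using d0 d1 d2 by (simp add: \<eta>_def dist_commute)
    qed
    define L where "L k = (SOME l. 0 < l \<and> J n (k - 1) < ?I l \<and> ?I l \<le> J n k)" for k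
    have L: "0 < L k \<and> J n (k - 1) < ?I (L k) \<and> ?I (L k) \<le> J n k" if "k \<in> S" for k
      unfolding L_def using someI_ex[OF ex[OF that]] .
    have neq: "L k1 \<noteq> L k2" if k1: "k1 \<in> S" and k2: "k2 \<in> S" and lt: "k1 < k2" for k1 k2
    proof -
      have m2: "1 \<le> k2" "k2 \<le> m" using S k2 by auto
      have "J n k1 \<le> J n (k2 - 1)"
      proof (cases "k1 = k2 - 1")
        case False
        then have "k1 < k2 - 1" using lt by simp
        moreover have "k2 - 1 \<le> m" using m2 by simp
        ultimately show ?thesis using Jmono[of k1 "k2 - 1"] by simp
      qed simp
      then have "?I (L k1) < ?I (L k2)" using L[OF k1] L[OF k2] by simp
      then show ?thesis by auto
    qed
    have inj: "inj_on L S"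
    proof (rule inj_onI)
      fix k1 k2 assume k1: "k1 \<in> S" and k2: "k2 \<in> S" and eq: "L k1 = L k2"
      show "k1 = k2"
      proof (rule ccontr)
        assume "k1 \<noteq> k2"
        then have "k1 < k2 \<or> k2 < k1" by auto
        then show False using neq[OF k1 k2] neq[OF k2 k1] eq by auto
      qed
    qed
    have "L ` S \<subseteq> {l\<in>{1..?N}. ?I l \<le> ?N}"
    proof
      fix l assume "l \<in> L ` S"
      then obtain k where k: "k \<in> S" "l = L k" by blast
      have "?I l \<le> ?N" using L[OF k(1)] Jg[of k n] S[OF k(1)] k(2) by auto
      moreover then have "l \<le> ?I l" by (rule idx_ge)
      ultimately show "l \<in> {l\<in>{1..?N}. ?I l \<le> ?N}" using L[OF k(1)] k(2) by auto
    qed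
    then show "card S \<le> card {l\<in>{1..?N}. ?I l \<le> ?N}"
      using inj by (intro card_inj_on_le) auto
  qed
qed

context SM begin

lemma idx_le_sets: "0 < N \<Longrightarrow> {\<omega>\<in>space M. idx T \<xi> N b k \<omega> \<le> N} \<in> sets M"
proof -
  assume N: "0 < N"
  have "{\<omega>\<in>space M. idx T \<xi> N b k \<omega> \<le> N} = (\<Union>i\<in>{..N}. {\<omega>\<in>space M. idx T \<xi> N b k \<omega> = i})" by auto
  moreover have "{\<omega>\<in>space M. idx T \<xi> N b k \<omega> = i} \<in> sets M" if "i \<le> N" for i
    using meas_idx[OF N that] F_sub by blast
  ultimately show ?thesis by auto
qed

lemma core_final:
  assumes cad: "cadlag_paths M T \<xi>"
    and b: "0 < b" "2 * b < Mr r" and bc: "2 * c \<le> b" and c: "0 < c'" "c' < c"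
    and hs: "0 \<le> h1" "h1 \<le> h2" "h2 \<le> h3"
    and al1: "\<And>s t x. 0 \<le> s \<Longrightarrow> s \<le> t \<Longrightarrow> t \<le> T \<Longrightarrow> t - s \<le> h1 \<Longrightarrow>
               measure (P s t x) {y. c' \<le> dist x y} \<le> \<alpha>1"
    and al2: "\<And>s t x. 0 \<le> s \<Longrightarrow> s \<le> t \<Longrightarrow> t \<le> T \<Longrightarrow> t - s \<le> h2 \<Longrightarrow>
               measure (P s t x) {y. c' \<le> dist x y} \<le> \<alpha>2"
    and al3: "\<And>s t x. 0 \<le> s \<Longrightarrow> s \<le> t \<Longrightarrow> t \<le> T \<Longrightarrow> t - s \<le> h3 \<Longrightarrow>
               measure (P s t x) {y. c' \<le> dist x y} \<le> \<alpha>3"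
    and a1: "\<alpha>1 < 1" "\<alpha>2 < 1" "\<alpha>3 < 1"
    and Q: "Q = exp (-h3) + (1 - exp (-h1)) * (\<alpha>1 / (1 - \<alpha>1)) + (exp (-h1) - exp (-h2)) * (\<alpha>2 / (1 - \<alpha>2))
   + (exp (-h2) - exp (-h3)) * (\<alpha>3 / (1 - \<alpha>3))" and Q1: "Q < 1"
  shows "(\<integral>\<^sup>+\<omega>. Y T \<xi> r \<omega> \<partial>M) \<le> ennreal (exp T * (Q / (1 - Q)))"
proof -
  define u where "u n \<omega> = (\<Sum>k\<in>{1..Suc n}. indicator {\<omega>\<in>space M. idx T \<xi> (Suc n) b k \<omega> \<le> Suc n} \<omega> :: ennreal)" for n \<omega>
  have um: "u n \<in> borel_measurable M" for n
    unfolding u_def using idx_le_sets[of "Suc n"] by (intro borel_measurable_sum borel_measurable_indicator) auto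
  have ubound: "integral\<^sup>N M (u n) \<le> ennreal (exp T * (Q / (1 - Q)))" for n
  proof -
    interpret C: core M F \<xi> P T "Suc n" b c c' h1 h2 h3 \<alpha>1 \<alpha>2 \<alpha>3
      by (intro core.intro SM_axioms core_axioms.intro) (use bc c hs al1 al2 al3 a1 in auto)
    have "C.qq = Q" by (simp add: C.qq_def Q)
    then show ?thesis using C.count_bound Q1 unfolding u_def by simp
  qed
  have ucard: "u n \<omega> = of_nat (card {l\<in>{1..Suc n}. idx T \<xi> (Suc n) b l \<omega> \<le> Suc n})" if "\<omega> \<in> space M" for n \<omega>
  proof -
    have "u n \<omega> = (\<Sum>k\<in>{1..Suc n}. of_bool (idx T \<xi> (Suc n) b k \<omega> \<le> Suc n))"
      unfolding u_def using that by (intro sum.cong refl) (simp add: indicator_def)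
    also have "\<dots> = of_nat (card ({1..Suc n} \<inter> {k. idx T \<xi> (Suc n) b k \<omega> \<le> Suc n}))" by (subst sum_of_bool_eq) auto
    finally show ?thesis by (simp add: Int_def conj_commute)
  qed
  have Yle: "Y T \<xi> r \<omega> \<le> liminf (\<lambda>n. u n \<omega>)" if \<omega>: "\<omega> \<in> space M" for \<omega>
    unfolding Y_def
  proof (rule SUP_least)
    fix \<kappa> assume \<kappa>: "\<kappa> \<in> partitions T"
    have rc: "\<forall>s\<in>{0..<T}. continuous (at_right s) (\<lambda>s. \<xi> s \<omega>)" using cad \<omega> by (simp add: cadlag_paths_def)
    have "eventually (\<lambda>n. card (Kset \<xi> r \<omega> \<kappa>) \<le> card {l\<in>{1..Suc n}. idx T \<xi> (Suc n) b l \<omega> \<le> Suc n}) sequentially"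
      by (rule det_bound[where \<xi>=\<xi> and \<omega>=\<omega>, OF Tpos rc b \<kappa>])
    then have "eventually (\<lambda>n. of_nat (card (Kset \<xi> r \<omega> \<kappa>)) \<le> u n \<omega>) sequentially"
      by (rule eventually_mono) (simp add: ucard[OF \<omega>])
    then show "of_nat (card (Kset \<xi> r \<omega> \<kappa>)) \<le> liminf (\<lambda>n. u n \<omega>)" by (rule Liminf_bounded)
  qed
  have "(\<integral>\<^sup>+\<omega>. Y T \<xi> r \<omega> \<partial>M) \<le> (\<integral>\<^sup>+\<omega>. liminf (\<lambda>n. u n \<omega>) \<partial>M)"
    using Yle by (intro nn_integral_mono) auto
  also have "\<dots> \<le> liminf (\<lambda>n. integral\<^sup>N M (u n))" by (rule nn_integral_liminf[OF um])
  also have "\<dots> \<le> limsup (\<lambda>n. integral\<^sup>N M (u n))" by (rule Liminf_le_Limsup) simp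
  also have "\<dots> \<le> ennreal (exp T * (Q / (1 - Q)))" using ubound by (intro Limsup_bounded) auto
  finally show ?thesis .
qed

end

lemma Mr_facts:
  fixes a0 :: real and r :: int
  assumes a0: "a0 > 0" and r: "r > \<lfloor>- (log 2 a0 + 3)\<rfloor>"
  shows "0 < Mr (r + 2)" "Mr r = 4 * Mr (r + 2)" "Mr (r + 2) < a0"
proof -
  show "0 < Mr (r + 2)" by (simp add: Mr_def)
  have "- real_of_int r - 1 = 2 + (- real_of_int (r + 2) - 1)" by simp
  then have "Mr r = 2 powr (2 + (- real_of_int (r + 2) - 1))" unfolding Mr_def by (rule arg_cong)
  also have "\<dots> = 2 powr 2 * Mr (r + 2)" unfolding Mr_def by (rule powr_add)
  finally show "Mr r = 4 * Mr (r + 2)" by simp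
  have "- (log 2 a0 + 3) < real_of_int r" using r[unfolded floor_less_iff] .
  then have "- real_of_int (r + 2) - 1 < log 2 a0" by simp
  then have "Mr (r + 2) < 2 powr (log 2 a0)" unfolding Mr_def by (intro powr_less_mono) auto
  then show "Mr (r + 2) < a0" using a0 by simp
qed

context SM begin

lemma al_gen:
  assumes cM: "class_M T P \<beta> \<gamma> a0 K" and \<beta>: "0 \<le> \<beta>" and K: "0 \<le> K"
    and c': "0 < c'" "c' \<le> a0"
    and st: "0 \<le> s" "s \<le> t" "t \<le> T" "t - s \<le> h"
  shows "measure (P s t x) {y. c' \<le> dist x y} \<le> K * h powr \<beta> / c' powr \<gamma>"
proof -
  let ?S = "{(x', s', t'). 0 \<le> s' \<and> s' \<le> t' \<and> t' \<le> min (s' + (t - s)) T}"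
  let ?f = "\<lambda>(x, s, t). measure (P s t x) {y. dist x y \<ge> c'}"
  have mem: "(x, s, t) \<in> ?S" using st by auto
  have bdd: "bdd_above (?f ` ?S)"
  proof (rule bdd_aboveI[where M=1])
    fix z assume "z \<in> ?f ` ?S"
    then obtain x' s' t' where z: "z = ?f (x', s', t')" "(x', s', t') \<in> ?S" by auto
    then have "prob_space (P s' t' x')" using P_prob by auto
    then show "z \<le> 1" using z by (simp add: prob_space.prob_le_1)
  qed
  have "measure (P s t x) {y. c' \<le> dist x y} \<le> alpha T P (t - s) c'"
    unfolding alpha_def using cSUP_upper[OF mem bdd] by simp
  also have "\<dots> \<le> K * (t - s) powr \<beta> / c' powr \<gamma>"
    using cM c' st unfolding class_M_def by auto
  also have "\<dots> \<le> K * h powr \<beta> / c' powr \<gamma>"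
    using st \<beta> K by (intro divide_right_mono mult_left_mono powr_mono2) auto
  finally show ?thesis .
qed

end

lemma num_level:
  fixes K h \<delta> \<beta> \<gamma> a c' :: real
  assumes K: "0 < K" and \<beta>: "1 \<le> \<beta>" and h: "0 \<le> h" "h \<le> \<delta>" and \<delta>: "0 < \<delta>"
    and Kd: "K * \<delta> powr \<beta> \<le> a powr \<gamma> / 2" and a: "0 < a"
    and c': "c' powr \<gamma> = a powr \<gamma> * (20 / 21)"
  shows "K * h powr \<beta> / c' powr \<gamma> \<le> 21 / 40 * (h / \<delta>)"
proof -
  have hd: "0 \<le> h / \<delta>" "h / \<delta> \<le> 1" using h \<delta> by auto
  have "h powr \<beta> = (\<delta> * (h / \<delta>)) powr \<beta>" using \<delta> by simp
  also have "\<dots> = \<delta> powr \<beta> * (h / \<delta>) powr \<beta>" by (rule powr_mult)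
  also have "(h / \<delta>) powr \<beta> \<le> (h / \<delta>) powr 1" using powr_mono'[OF \<beta> hd] .
  also have "(h / \<delta>) powr 1 = h / \<delta>" by (rule powr_one[OF hd(1)])
  finally have "h powr \<beta> \<le> \<delta> powr \<beta> * (h / \<delta>)" using \<delta> by (simp add: mult_left_mono)
  then have "K * h powr \<beta> \<le> K * (\<delta> powr \<beta> * (h / \<delta>))" using K by (intro mult_left_mono) auto
  then have "K * h powr \<beta> \<le> K * \<delta> powr \<beta> * (h / \<delta>)" by (simp only: mult.assoc)
  also have "\<dots> \<le> a powr \<gamma> / 2 * (h / \<delta>)" using Kd hd by (intro mult_right_mono) auto
  finally have 1: "K * h powr \<beta> \<le> a powr \<gamma> / 2 * (h / \<delta>)" .
  have ap: "0 < a powr \<gamma>" using a by simp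
  have "K * h powr \<beta> / c' powr \<gamma> \<le> (a powr \<gamma> / 2 * (h / \<delta>)) / (a powr \<gamma> * (20 / 21))"
    unfolding c' using 1 ap by (intro divide_right_mono) auto
  also have "\<dots> = 21 / 40 * (h / \<delta>)" using ap by (simp add: field_simps)
  finally show ?thesis .
qed

lemma num_case1:
  fixes \<delta> :: real
  assumes d: "0 < \<delta>" "\<delta> \<le> 1"
  defines "Q \<equiv> exp (-(\<delta>/2)) + (1 - exp (-(\<delta>/2))) * ((21/80) / (1 - 21/80)) + (exp (-(\<delta>/2)) - exp (-(\<delta>/2))) * ((21/80) / (1 - 21/80))
   + (exp (-(\<delta>/2)) - exp (-(\<delta>/2))) * ((21/80) / (1 - 21/80))"
  shows "Q < 1" "Q / (1 - Q) \<le> 4 / \<delta>"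
proof -
  define h where "h = \<delta> / 2"
  define E where "E = exp h"
  have hpos: "0 < h" using d by (simp add: h_def)
  have E: "1 + h + h\<^sup>2 / 2 \<le> E" unfolding E_def using exp_lower_Taylor_quadratic[of h] hpos by simp
  have "0 \<le> h\<^sup>2 / 2" by simp
  then have E1: "1 < E" using E hpos by linarith
  have eh: "exp (-(\<delta>/2)) = 1 / E" by (simp add: E_def h_def exp_minus field_simps)
  have Qe: "Q = 1 / E + (1 - 1 / E) * (21 / 59)" unfolding Q_def eh by simp
  show Q1: "Q < 1" unfolding Qe using E1 by (simp add: field_simps)
  define y where "y = E - 1"
  have y: "h + h\<^sup>2 / 2 \<le> y" using E by (simp add: y_def)
  have ypos: "0 < y" using E1 by (simp add: y_def)
  have "\<delta> \<le> y * ((152 - 21 * \<delta>) / 59)"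
  proof -
    have "(h + h\<^sup>2 / 2) * ((152 - 21 * \<delta>) / 59) \<le> y * ((152 - 21 * \<delta>) / 59)"
      using y d by (intro mult_right_mono) auto
    moreover have "\<delta> \<le> (h + h\<^sup>2 / 2) * ((152 - 21 * \<delta>) / 59)"
    proof -
      have eq: "(h + h\<^sup>2 / 2) * ((152 - 21 * \<delta>) / 59) = \<delta> + (17 * \<delta> + 17 / 2 * \<delta>\<^sup>2 - 21 / 8 * \<delta> ^ 3) / 59"
        unfolding h_def by (simp add: field_simps power2_eq_square power3_eq_cube)
      have "\<delta> ^ 3 \<le> \<delta>\<^sup>2" using d by (simp add: power2_eq_square power3_eq_cube mult_left_le)
      moreover have "0 \<le> \<delta>\<^sup>2" by simp
      ultimately have "0 \<le> 17 * \<delta> + 17 / 2 * \<delta>\<^sup>2 - 21 / 8 * \<delta> ^ 3" using d by linarith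
      then have "0 \<le> (17 * \<delta> + 17 / 2 * \<delta>\<^sup>2 - 21 / 8 * \<delta> ^ 3) / 59" by simp
      then show ?thesis unfolding eq by simp
    qed
    ultimately show ?thesis by linarith
  qed
  then have key: "\<delta> * (1 + y * (21 / 59)) \<le> 4 * (y * (38 / 59))" by (simp add: field_simps)
  have Qy: "Q = (1 + y * (21/59)) / E" "1 - Q = y * (38/59) / E"
    unfolding Qe y_def using E1 by (simp_all add: field_simps)
  have Epos: "0 < E" using E1 by simp
  have "\<delta> * (1 + y * (21 / 59)) / E \<le> 4 * (y * (38 / 59)) / E"
    using key Epos by (intro divide_right_mono) auto
  then have QQ: "Q * \<delta> \<le> 4 * (1 - Q)" unfolding Qy(2) unfolding Qy(1) by (simp add: field_simps)
  have Q1': "0 < 1 - Q" using Q1 by simp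
  have "Q / (1 - Q) \<le> 4 / \<delta> \<longleftrightarrow> Q * \<delta> \<le> 4 * (1 - Q)"
    using Q1' d by (simp add: field_simps)
  then have "Q / (1 - Q) \<le> 4 / \<delta>" using QQ by simp
  then show "Q / (1 - Q) \<le> 4 / \<delta>" .
qed

lemma num_case2:
  defines "Q \<equiv> exp (-(3/4) :: real) + (1 - exp (-(1/4))) * ((21/160) / (1 - 21/160)) + (exp (-(1/4)) - exp (-(1/2))) * ((21/80) / (1 - 21/80))
   + (exp (-(1/2)) - exp (-(3/4))) * ((63/160) / (1 - 63/160))"
  shows "Q < 1" "Q / (1 - Q) \<le> 195 / 100"
proof -
  define x where "x = exp (-(1/4) :: real)"
  have x2: "exp (-(1/2)) = x ^ 2" unfolding x_def by (simp add: exp_of_nat_mult[symmetric] power2_eq_square exp_add[symmetric])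
  have x3: "exp (-(3/4)) = x ^ 3" unfolding x_def by (simp add: power3_eq_cube exp_add[symmetric])
  have xpos: "0 < x" by (simp add: x_def)
  have "41/32 \<le> exp (1/4 :: real)" using exp_lower_Taylor_quadratic[of "1/4::real"] by (simp add: power2_eq_square)
  then have xle: "x \<le> 32/41" unfolding x_def by (simp add: exp_minus field_simps)
  have Qx: "Q = x^3 + (1 - x) * (21/139) + (x - x^2) * (21/59) + (x^2 - x^3) * (63/97)"
    unfolding Q_def x2 x3 x_def[symmetric] by simp
  have "x^2 \<le> (32/41)^2" using xle xpos by (intro power_mono) auto
  then have p2: "x^2 \<le> 1024/1681" by (simp add: power2_eq_square)
  have "x^3 \<le> (32/41)^3" using xle xpos by (intro power_mono) auto
  then have p3: "x^3 \<le> 32768/68921" by (simp add: power3_eq_cube)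
  have "Q = 34/97 * x^3 + (63/97 - 21/59) * x^2 + (21/59 - 21/139) * x + 21/139"
    unfolding Qx by (simp add: field_simps)
  also have "\<dots> \<le> 34/97 * (32768/68921) + (63/97 - 21/59) * (1024/1681) + (21/59 - 21/139) * (32/41) + 21/139"
    using p2 p3 xle by (intro add_mono mult_left_mono) auto
  also have "\<dots> \<le> 39/59" by simp
  finally have "Q \<le> 39/59" .
  then show "Q < 1" "Q / (1 - Q) \<le> 195/100" by (simp_all add: field_simps)
qed

theorem lemma3p1:
  fixes M :: "'b measure" and F :: "real \<Rightarrow> 'b measure"
    and \<xi> :: "real \<Rightarrow> 'b \<Rightarrow> 'a::polish_space"
    and P :: "real \<Rightarrow> real \<Rightarrow> 'a \<Rightarrow> 'a measure"
    and T \<beta> \<gamma> a0 K :: real and r :: int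
  assumes "prob_space M"
    and "T > 0"
    and "strong_markov M F T \<xi> P"
    and "cadlag_paths M T \<xi>"
    and "\<beta> \<ge> 1" and "\<gamma> > 0" and "a0 > 0" and "K > 0"
    and "class_M T P \<beta> \<gamma> a0 K"
    and "r > \<lfloor>- (log 2 a0 + 3)\<rfloor>"
  defines "Tr \<equiv> min (min (((min (Mr (r + 2)) a0) powr \<gamma> / (2 * K)) powr (1 / \<beta>)) T) 1"
  shows "(Tr < 1 \<longrightarrow> (\<integral>\<^sup>+ \<omega>. Y T \<xi> r \<omega> \<partial>M) \<le> ennreal (4 / Tr * exp T)) \<and>
         (Tr = 1 \<longrightarrow> (\<integral>\<^sup>+ \<omega>. Y T \<xi> r \<omega> \<partial>M) \<le> ennreal (195 / 100 * exp T))"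
proof -
  note prob = assms(1) and Tpos = assms(2) and sm = assms(3) and cad = assms(4)
    and \<beta> = assms(5) and \<gamma> = assms(6) and a0 = assms(7) and K = assms(8) and cM = assms(9)
    and r = assms(10)
  interpret SM M F \<xi> P T by (rule SM.intro[OF prob Tpos sm])
  define a where "a = Mr (r + 2)"
  have apos: "0 < a" and Mra: "Mr r = 4 * a" and aa0: "a < a0"
    using Mr_facts[OF a0 r] by (simp_all add: a_def)
  have mina: "min (Mr (r + 2)) a0 = a" using aa0 by (simp add: a_def)
  define D where "D = (a powr \<gamma> / (2 * K)) powr (1 / \<beta>)"
  define \<delta> where "\<delta> = Tr"
  have \<delta>eq: "\<delta> = min (min D T) 1" unfolding \<delta>_def Tr_def D_def mina ..
  have agp: "0 < a powr \<gamma>" using apos by simp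
  have Dpos: "0 < D" unfolding D_def using agp K by simp
  have \<delta>pos: "0 < \<delta>" and \<delta>T: "\<delta> \<le> T" and \<delta>1: "\<delta> \<le> 1" and \<delta>D: "\<delta> \<le> D"
    using Dpos Tpos by (auto simp: \<delta>eq)
  have Kd: "K * \<delta> powr \<beta> \<le> a powr \<gamma> / 2"
  proof -
    have "\<delta> powr \<beta> \<le> D powr \<beta>" using \<delta>pos \<delta>D \<beta> by (intro powr_mono2) auto
    also have "D powr \<beta> = (a powr \<gamma> / (2 * K)) powr (1 / \<beta> * \<beta>)" unfolding D_def by (rule powr_powr)
    also have "\<dots> = a powr \<gamma> / (2 * K)" using \<beta> agp K by simp
    finally have "\<delta> powr \<beta> \<le> a powr \<gamma> / (2 * K)" .
    then have "K * \<delta> powr \<beta> \<le> K * (a powr \<gamma> / (2 * K))" using K by (intro mult_left_mono) auto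
    also have "\<dots> = a powr \<gamma> / 2" using K by simp
    finally show ?thesis .
  qed
  define c' where "c' = a * (20 / 21) powr (1 / \<gamma>)"
  have fpos: "0 < (20 / 21 :: real) powr (1 / \<gamma>)" by simp
  have flt: "(20 / 21 :: real) powr (1 / \<gamma>) < 1"
  proof -
    have "(20 / 21 :: real) powr (1 / \<gamma>) < 1 powr (1 / \<gamma>)" using \<gamma> by (intro powr_less_mono2) auto
    then show ?thesis by simp
  qed
  have c'pos: "0 < c'" unfolding c'_def using apos fpos by simp
  have c'a: "c' < a" unfolding c'_def using apos flt by simp
  have c'g: "c' powr \<gamma> = a powr \<gamma> * (20 / 21)"
  proof -
    have "c' powr \<gamma> = a powr \<gamma> * ((20 / 21) powr (1 / \<gamma>)) powr \<gamma>" unfolding c'_def by (rule powr_mult)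
    also have "((20 / 21 :: real) powr (1 / \<gamma>)) powr \<gamma> = (20 / 21) powr (1 / \<gamma> * \<gamma>)" by (rule powr_powr)
    also have "\<dots> = 20 / 21" using \<gamma> by simp
    finally show ?thesis .
  qed
  define c where "c = (c' + a) / 2"
  define b where "b = c' + a"
  have bpos: "0 < b" using c'pos apos by (simp add: b_def)
  have b2: "2 * b < Mr r" using c'a Mra by (simp add: b_def)
  have bc: "2 * c \<le> b" by (simp add: b_def c_def)
  have cc: "0 < c'" "c' < c" using c'pos c'a by (auto simp: c_def)
  have lev: "measure (P s t x) {y. c' \<le> dist x y} \<le> 21 / 40 * (h / \<delta>)"
    if h: "0 \<le> h" "h \<le> \<delta>" and st: "0 \<le> s" "s \<le> t" "t \<le> T" "t - s \<le> h" for h s t x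
  proof -
    have "measure (P s t x) {y. c' \<le> dist x y} \<le> K * h powr \<beta> / c' powr \<gamma>"
      using c'pos c'a aa0 \<beta> K by (intro al_gen[OF cM _ _ _ _ st]) auto
    also have "\<dots> \<le> 21 / 40 * (h / \<delta>)"
      by (rule num_level[OF K \<beta> h \<delta>pos Kd apos c'g])
    finally show ?thesis .
  qed
  have expT: "0 < exp T" by simp
  show ?thesis
  proof (intro conjI impI)
    assume Tr1: "Tr < 1"
    define Q where "Q = exp (-(\<delta>/2)) + (1 - exp (-(\<delta>/2))) * ((21/80) / (1 - 21/80)) + (exp (-(\<delta>/2)) - exp (-(\<delta>/2))) * ((21/80) / (1 - 21/80))
      + (exp (-(\<delta>/2)) - exp (-(\<delta>/2))) * ((21/80) / (1 - 21/80))"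
    have nc: "Q < 1" "Q / (1 - Q) \<le> 4 / \<delta>" using num_case1[OF \<delta>pos \<delta>1] by (simp_all add: Q_def)
    have al: "measure (P s t x) {y. c' \<le> dist x y} \<le> 21 / 80"
      if "0 \<le> s" "s \<le> t" "t \<le> T" "t - s \<le> \<delta> / 2" for s t x
      using lev[of "\<delta> / 2" s t x] that \<delta>pos by simp
    have "(\<integral>\<^sup>+\<omega>. Y T \<xi> r \<omega> \<partial>M) \<le> ennreal (exp T * (Q / (1 - Q)))"
      by (rule core_final[OF cad bpos b2 bc cc, of "\<delta>/2" "\<delta>/2" "\<delta>/2" "21/80" "21/80" "21/80" Q])
         (use \<delta>pos al nc in \<open>auto simp: Q_def\<close>)
    also have "\<dots> \<le> ennreal (4 / Tr * exp T)"
    proof (intro ennreal_leI)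
      have "exp T * (Q / (1 - Q)) \<le> exp T * (4 / \<delta>)" using nc expT by (intro mult_left_mono) auto
      then show "exp T * (Q / (1 - Q)) \<le> 4 / Tr * exp T" by (simp add: \<delta>_def mult.commute)
    qed
    finally show "(\<integral>\<^sup>+\<omega>. Y T \<xi> r \<omega> \<partial>M) \<le> ennreal (4 / Tr * exp T)" .
  next
    assume Tr1: "Tr = 1"
    then have d1: "\<delta> = 1" by (simp add: \<delta>_def)
    define Q where "Q = exp (-(3/4) :: real) + (1 - exp (-(1/4))) * ((21/160) / (1 - 21/160)) + (exp (-(1/4)) - exp (-(1/2))) * ((21/80) / (1 - 21/80))
   + (exp (-(1/2)) - exp (-(3/4))) * ((63/160) / (1 - 63/160))"
    have nc: "Q < 1" "Q / (1 - Q) \<le> 195 / 100" using num_case2 by (simp_all add: Q_def)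
    have al1: "measure (P s t x) {y. c' \<le> dist x y} \<le> 21 / 160"
      if "0 \<le> s" "s \<le> t" "t \<le> T" "t - s \<le> 1/4" for s t x
      using lev[of "1/4" s t x] that d1 by simp
    have al2: "measure (P s t x) {y. c' \<le> dist x y} \<le> 21 / 80"
      if "0 \<le> s" "s \<le> t" "t \<le> T" "t - s \<le> 1/2" for s t x
      using lev[of "1/2" s t x] that d1 by simp
    have al3: "measure (P s t x) {y. c' \<le> dist x y} \<le> 63 / 160"
      if "0 \<le> s" "s \<le> t" "t \<le> T" "t - s \<le> 3/4" for s t x
      using lev[of "3/4" s t x] that d1 by simp
    have "(\<integral>\<^sup>+\<omega>. Y T \<xi> r \<omega> \<partial>M) \<le> ennreal (exp T * (Q / (1 - Q)))"
      by (rule core_final[OF cad bpos b2 bc cc, of "1/4" "1/2" "3/4" "21/160" "21/80" "63/160" Q])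
         (use al1 al2 al3 nc in \<open>auto simp: Q_def\<close>)
    also have "\<dots> \<le> ennreal (195 / 100 * exp T)"
    proof (intro ennreal_leI)
      have "exp T * (Q / (1 - Q)) \<le> exp T * (195 / 100)" using nc expT by (intro mult_left_mono) auto
      then show "exp T * (Q / (1 - Q)) \<le> 195 / 100 * exp T" by (simp add: mult.commute)
    qed
    finally show "(\<integral>\<^sup>+\<omega>. Y T \<xi> r \<omega> \<partial>M) \<le> ennreal (195 / 100 * exp T)" .
  qed
qed

end
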